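(* Let $d\ge2$, $\nu\ge2$, and let $\Gamma$ be the $\mathbb Z^d$-periodic graph with vertex set $\mathbb Z^d\cup\{v_j+m:\ j=1,\dots,\nu-1,\ m\in\mathbb Z^d\}$ and edges: the lattice edges $(m,m+a_s)$, $m\in\mathbb Z^d$, $s=1,\dots,d$ (where $a_1,\dots,a_d$ is the standard basis), and the edges $(v_j+m,\,m)$, $j=1,\dots,\nu-1$, $m\in\mathbb Z^d$; $\mathbb Z^d$ acts by translation. Thus the fundamental graph $\Gamma_*$ consists of the vertex $v_\nu$ (class of $0$) with $d$ undirected loops of indices $a_1,\dots,a_d$, plus $\nu-1$ vertices $v_1,\dots,v_{\nu-1}$ joined to $v_\nu$ by edges of index $0$ (indices w.r.t. $V_0=\{v_1,\dots,v_{\nu-1},0\}$). Put $\xi=\nu-1+2d$ and $\vartheta_\pi=(\pi,\dots,\pi)$. Then $\Gamma$ is an exact loop graph with exact quasimomentum $\vartheta_\pi$, and: (i) the spectrum of the normalized Laplacian is $\sigma(\Delta)=\sigma_{ac}(\Delta)\cup\sigma_{fb}(\Delta)$ with $\sigma_{fb}(\Delta)=\{1\}$, a degenerate band of multiplicity $\nu-2$, and $\sigma_{ac}(\Delta)=\sigma^0_1\cup\sigma^0_\nu$, $\sigma^0_1=[0,\frac{2d}{\xi}]$, $\sigma^0_\nu=[2-\frac{2d}{\xi},2]$; (ii) for every real $\mathbb Z^d$-periodic potential $Q$, the spectrum of $H=\Delta+Q$ is $\sigma(H)=\bigcup_{n=1}^\nu[\lambda_n(0),\lambda_n(\vartheta_\pi)]$;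 (iii) let $q_j=Q(v_j)$, $j=1,\dots,\nu$, normalized so that $q_\nu=0$; if $q_1,\dots,q_{\nu-1}$ are pairwise distinct, then $\sigma(H)=\sigma_{ac}(H)$, i.e. $H$ has no eigenvalues of infinite multiplicity; (iv) if some value $q_*$ occurs exactly $m$ times among $q_1,\dots,q_{\nu-1}$, then $\{q_*+1\}$ is a degenerate band of $H$ of multiplicity $m-1$; (v) $|\sigma(H)|=\frac{4d}{\xi}$.
   Context: Normalized Laplacian on a graph with vertex set $V$: each undirected edge gives two oriented edges (a loop too), $\mathcal A$ the set of oriented edges, $\varkappa_v$ the number of oriented edges starting at $v$, $(\Delta f)(v)=f(v)-\sum_{(v,u)\in\mathcal A}\frac{f(u)}{\sqrt{\varkappa_v\varkappa_u}}$ on $\ell^2(V)$; $H=\Delta+Q$ with $Q:V\to\mathbb R$ translation invariant. Here $\varkappa=1$ at $v_j$ ($j<\nu$) and $\varkappa=\xi$ at lattice vertices. Edge index of an oriented edge $(u,v)$: writing each vertex as $v=v_0+[v]$ with $v_0\in V_0$, $[v]\in\mathbb Z^d$, $\tau(u,v)=[v]-[u]$; bridges are edges with nonzero index. Fiber operators for $\vartheta\in\mathbb T^d=\mathbb R^d/(2\pi\mathbb Z)^d$: $(\Delta(\vartheta)f)(v)=f(v)-\sum_{\mathbf e=(v,u)\in\mathcal A_*}\frac{e^{i\langle\tau(\mathbf e),\vartheta\rangle}}{\sqrt{\varkappa_v\varkappa_u}}f(u)$ on $\ell^2(V_* )$, $\mathcal A_*=\mathcal A/\mathbb Z^d$, and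 $H(\vartheta)=\Delta(\vartheta)+Q$, with eigenvalues $\lambda_1(\vartheta)\le\dots\le\lambda_\nu(\vartheta)$ (for $\Delta$: $\lambda^0_n(\vartheta)$). Bands: $\sigma_n(H)=\lambda_n(\mathbb T^d)$, $\sigma^0_n=\lambda^0_n(\mathbb T^d)$; $\sigma(H)$ is their union. A band that is a single point $\{\lambda_*\}$ is degenerate (an eigenvalue of infinite multiplicity); its multiplicity is the multiplicity of $\lambda_*$ as an eigenvalue of $H(\vartheta)$ for a.e. $\vartheta$; $\sigma_{fb}$ is the set of degenerate bands, $\sigma_{ac}$ the union of nondegenerate bands. $\Gamma$ is a loop graph if every bridge of $\Gamma_*$ is a loop; it is an exact loop graph with exact quasimomentum $\vartheta_0$ if moreover $\cos\langle\tau(\mathbf e),\vartheta_0\rangle=-1$ for every bridge $\mathbf e$ of $\Gamma_*$. *)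

theory Defs
  imports "HOL-Analysis.Analysis" "HOL-Computational_Algebra.Polynomial"
          "Jordan_Normal_Form.Char_Poly"
begin

text \<open>Fundamental graph \<Gamma>_* of a Z^d-periodic graph: vertices 1..N (finite set V_*),
  oriented edges given as a multiset of triples (u, v, tau) where tau :: int^'d is the
  edge index tau(u,v).  Every undirected edge (a loop too) contributes two oriented
  edges (u,v,tau) and (v,u,-tau).\<close>

type_synonym 'd oedge = "nat \<times> nat \<times> (int ^ 'd)"

definition esrc :: "'d oedge \<Rightarrow> nat" where "esrc e = fst e"
definition etgt :: "'d oedge \<Rightarrow> nat" where "etgt e = fst (snd e)"
definition eidx :: "'d oedge \<Rightarrow> int ^ 'd" where "eidx e = snd (snd e)"

definition pair_idx :: "int ^ 'd::finite \<Rightarrow> real ^ 'd \<Rightarrow> real" where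
  "pair_idx \<tau> \<theta> = (\<Sum>i\<in>UNIV. of_int (\<tau> $ i) * \<theta> $ i)"

definition kappa :: "'d oedge multiset \<Rightarrow> nat \<Rightarrow> nat" where
  "kappa A v = size (filter_mset (\<lambda>e. esrc e = v) A)"

definition fiber_entry :: "'d::finite oedge multiset \<Rightarrow> (nat \<Rightarrow> real) \<Rightarrow> real ^ 'd
     \<Rightarrow> nat \<Rightarrow> nat \<Rightarrow> complex" where
  "fiber_entry A Q \<theta> u w =
     (if u = w then 1 + complex_of_real (Q u) else 0)
     - (\<Sum>e\<in>#filter_mset (\<lambda>e. esrc e = u \<and> etgt e = w) A.
            cis (pair_idx (eidx e) \<theta>))
       / complex_of_real (sqrt (real (kappa A u) * real (kappa A w)))"

text \<open>H(theta) as an N x N matrix; row/column i corresponds to vertex i+1\<close>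
definition fiber_mat :: "nat \<Rightarrow> 'd::finite oedge multiset \<Rightarrow> (nat \<Rightarrow> real) \<Rightarrow> real ^ 'd
     \<Rightarrow> complex mat" where
  "fiber_mat N A Q \<theta> = mat N N (\<lambda>(i, j). fiber_entry A Q \<theta> (Suc i) (Suc j))"

text \<open>eigenvalues of H(theta) counted with multiplicity (H(theta) is Hermitian, so they are real)\<close>
definition fiber_eigs :: "nat \<Rightarrow> 'd::finite oedge multiset \<Rightarrow> (nat \<Rightarrow> real) \<Rightarrow> real ^ 'd
     \<Rightarrow> real multiset" where
  "fiber_eigs N A Q \<theta> = image_mset Re (proots (char_poly (fiber_mat N A Q \<theta>)))"

definition lam :: "nat \<Rightarrow> 'd::finite oedge multiset \<Rightarrow> (nat \<Rightarrow> real) \<Rightarrow> real ^ 'd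
     \<Rightarrow> nat \<Rightarrow> real" where
  "lam N A Q \<theta> n = sorted_list_of_multiset (fiber_eigs N A Q \<theta>) ! (n - 1)"

text \<open>band sigma_n(H) = lambda_n(T^d) (theta ranges over R^d, all functions are 2pi-periodic)\<close>
definition band :: "nat \<Rightarrow> 'd::finite oedge multiset \<Rightarrow> (nat \<Rightarrow> real) \<Rightarrow> nat \<Rightarrow> real set" where
  "band N A Q n = (\<lambda>\<theta>. lam N A Q \<theta> n) ` UNIV"

definition spec :: "nat \<Rightarrow> 'd::finite oedge multiset \<Rightarrow> (nat \<Rightarrow> real) \<Rightarrow> real set" where
  "spec N A Q = (\<Union>n\<in>{1..N}. band N A Q n)"

definition degenerate_band :: "nat \<Rightarrow> 'd::finite oedge multiset \<Rightarrow> (nat \<Rightarrow> real) \<Rightarrow> nat \<Rightarrow> bool" where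
  "degenerate_band N A Q n \<longleftrightarrow> (\<exists>c. band N A Q n = {c})"

definition spec_fb :: "nat \<Rightarrow> 'd::finite oedge multiset \<Rightarrow> (nat \<Rightarrow> real) \<Rightarrow> real set" where
  "spec_fb N A Q = {c. \<exists>n\<in>{1..N}. band N A Q n = {c}}"

definition spec_ac :: "nat \<Rightarrow> 'd::finite oedge multiset \<Rightarrow> (nat \<Rightarrow> real) \<Rightarrow> real set" where
  "spec_ac N A Q = (\<Union>n\<in>{n\<in>{1..N}. \<not> degenerate_band N A Q n}. band N A Q n)"

definition fb_multiplicity :: "nat \<Rightarrow> 'd::finite oedge multiset \<Rightarrow> (nat \<Rightarrow> real) \<Rightarrow> real
     \<Rightarrow> nat \<Rightarrow> bool" where
  "fb_multiplicity N A Q c m \<longleftrightarrow> (AE \<theta> in lborel. count (fiber_eigs N A Q \<theta>) c = m)"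

definition bridge :: "'d::finite oedge \<Rightarrow> bool" where
  "bridge e \<longleftrightarrow> eidx e \<noteq> 0"

definition loop_graph :: "'d::finite oedge multiset \<Rightarrow> bool" where
  "loop_graph A \<longleftrightarrow> (\<forall>e\<in>#A. bridge e \<longrightarrow> esrc e = etgt e)"

definition exact_loop_graph :: "'d::finite oedge multiset \<Rightarrow> real ^ 'd \<Rightarrow> bool" where
  "exact_loop_graph A \<theta>0 \<longleftrightarrow> loop_graph A \<and>
      (\<forall>e\<in>#A. bridge e \<longrightarrow> cos (pair_idx (eidx e) \<theta>0) = -1)"

text \<open>The specific graph: vertices v_1..v_{nu-1} (pendant, index 0 edges to v_nu) and
  v_nu (class of 0 in Z^d) carrying d undirected loops of indices a_1..a_d.\<close>
definition Gam :: "nat \<Rightarrow> ('d::finite) oedge multiset" where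
  "Gam \<nu> =
     image_mset (\<lambda>j. (j, \<nu>, 0)) (mset_set {1..<\<nu>})
   + image_mset (\<lambda>j. (\<nu>, j, 0)) (mset_set {1..<\<nu>})
   + image_mset (\<lambda>s. (\<nu>, \<nu>, axis s 1)) (mset_set (UNIV :: 'd set))
   + image_mset (\<lambda>s. (\<nu>, \<nu>, - axis s 1)) (mset_set (UNIV :: 'd set))"

definition theta_pi :: "real ^ 'd::finite" where
  "theta_pi = (\<chi> i. pi)"

end

theory Submission
  imports Defs
begin


lemma count_mset_card: "count (mset xs) y = card {i. i < length xs \<and> xs ! i = y}"
  unfolding count_mset count_list_eq_length_filter length_filter_conv_card
  by (rule arg_cong[where f=card]) auto

lemma ivt_open:
  fixes f :: "real \<Rightarrow> real"
  assumes "lo < up" "continuous_on {lo..up} f" "f lo < 0" "0 < f up"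
  shows "\<exists>y. lo < y \<and> y < up \<and> f y = 0"
proof -
  obtain x where x: "lo \<le> x" "x \<le> up" "f x = 0"
    using IVT'[of f lo 0 up] assms by auto
  hence "x \<noteq> lo" "x \<noteq> up" using assms by auto
  thus ?thesis using x by (intro exI[of _ x]) auto
qed

lemma count_image_inj: "inj f \<Longrightarrow> count (image_mset f M) (f x) = count M x"
proof -
  assume inj: "inj f"
  have "f -` {f x} = {x}" using inj by (auto simp: inj_def)
  thus ?thesis by (cases "x \<in># M") (auto simp: count_image_mset not_in_iff)
qed

lemma subset_size_eq: "A \<subseteq># B \<Longrightarrow> size B \<le> size A \<Longrightarrow> A = B"
proof -
  assume AB: "A \<subseteq># B" and s: "size B \<le> size A"
  have "size (B - A) = 0" using size_Diff_submset[OF AB] s by simp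
  hence "B - A = {#}" by simp
  thus "A = B" using subset_mset.add_diff_inverse[OF AB] by simp
qed

lemma sum_mset_of_real_list: "sum_mset (image_mset complex_of_real (mset xs)) = complex_of_real (sum_list xs)"
  by (induction xs) auto

lemma vieta_aux:
  fixes M :: "complex multiset"
  shows "coeff (\<Prod>x\<in>#M. [:-x, 1:]) (size M) = 1 \<and>
         (\<forall>n>size M. coeff (\<Prod>x\<in>#M. [:-x, 1:]) n = 0) \<and>
         (0 < size M \<longrightarrow> coeff (\<Prod>x\<in>#M. [:-x, 1:]) (size M - 1) = - sum_mset M)"
proof (induction M)
  case empty
  show ?case by (auto simp: coeff_eq_0)
next
  case (add x M)
  define q where "q = (\<Prod>x\<in>#M. [:-x, 1:])"
  have eq: "(\<Prod>x\<in>#add_mset x M. [:-x, 1:]) = [:-x, 1:] * q" by (simp add: q_def)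
  have cS: "coeff ([:-x, 1:] * q) (Suc n) = - x * coeff q (Suc n) + coeff q n" for n
    by (simp add: mult_pCons_left)
  have c0: "coeff ([:-x, 1:] * q) 0 = - x * coeff q 0"
    by (simp add: mult_pCons_left)
  have IH1: "coeff q (size M) = 1" and IH2: "\<And>n. n > size M \<Longrightarrow> coeff q n = 0"
    and IH3: "0 < size M \<Longrightarrow> coeff q (size M - 1) = - sum_mset M"
    using add.IH unfolding q_def by auto
  show ?case unfolding eq size_add_mset
  proof (intro conjI allI impI)
    show "coeff ([:-x, 1:] * q) (Suc (size M)) = 1" using cS IH1 IH2 by simp
    fix n assume "n > Suc (size M)"
    then obtain m where "n = Suc m" "m > size M" by (cases n) auto
    thus "coeff ([:-x, 1:] * q) n = 0" using cS IH2 by simp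
  next
    show "coeff ([:-x, 1:] * q) (Suc (size M) - 1) = - sum_mset (add_mset x M)"
    proof (cases "size M")
      case 0
      thus ?thesis using c0 IH1 by simp
    next
      case (Suc m)
      have "coeff ([:-x, 1:] * q) (Suc m) = - x * coeff q (Suc m) + coeff q m" by (rule cS)
      thus ?thesis using Suc IH1 IH3 by simp
    qed
  qed
qed

lemma measure_union_intervals:
  fixes l u :: "nat \<Rightarrow> real"
  assumes "\<And>k. k < n \<Longrightarrow> l k \<le> u k" "\<And>i j. i < j \<Longrightarrow> j < n \<Longrightarrow> u i \<le> l j"
  shows "emeasure lborel (\<Union>k<n. {l k..u k}) = ennreal (\<Sum>k<n. u k - l k)"
  using assms
proof (induction n)
  case 0 thus ?case by simp
next
  case (Suc n)
  define U where "U = (\<Union>k<n. {l k..u k})"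
  have IH: "emeasure lborel U = ennreal (\<Sum>k<n. u k - l k)"
    unfolding U_def using Suc.prems by (intro Suc.IH) auto
  have lu: "l n \<le> u n" using Suc.prems by auto
  have sub: "U \<subseteq> {..l n}" unfolding U_def using Suc.prems(2)[of _ n] by force
  have cU: "closed U" unfolding U_def by (intro closed_UN) auto
  hence sU: "U \<in> sets lborel" by simp
  have eq: "(\<Union>k<Suc n. {l k..u k}) = (U \<union> {l n<..u n}) \<union> {l n}"
    unfolding U_def lessThan_Suc using lu by auto
  have "emeasure lborel (\<Union>k<Suc n. {l k..u k}) = emeasure lborel (U \<union> {l n<..u n})"
  proof -
    have sI: "{l n<..u n} \<in> sets lborel" by simp
    have "U \<union> {l n<..u n} \<in> sets lborel" using sU sI by (rule sets.Un)
    moreover have "{l n} \<in> null_sets lborel" by (rule countable_imp_null_set_lborel) simp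
    ultimately show ?thesis unfolding eq by (rule emeasure_Un_null_set)
  qed
  also have "\<dots> = emeasure lborel U + emeasure lborel {l n<..u n}"
    using sub sU by (intro plus_emeasure[symmetric]) auto
  also have "\<dots> = ennreal (\<Sum>k<n. u k - l k) + ennreal (u n - l n)"
    using IH lu by simp
  also have "\<dots> = ennreal (\<Sum>k<Suc n. u k - l k)"
    using Suc.prems(1) lu by (subst ennreal_plus[symmetric]) (auto intro: sum_nonneg)
  finally show ?case .
qed

lemma det_arrow:
  fixes B :: "complex mat" and m :: nat
  assumes B: "B \<in> carrier_mat (Suc m) (Suc m)"
    and off: "\<And>i j. i < m \<Longrightarrow> j < m \<Longrightarrow> i \<noteq> j \<Longrightarrow> B $$ (i,j) = 0"
    and dnz: "\<And>i. i < m \<Longrightarrow> B $$ (i,i) \<noteq> 0"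
  shows "det B = (\<Prod>i<m. B $$ (i,i)) * (B $$ (m,m) - (\<Sum>i<m. B $$ (m,i) * B $$ (i,m) / B $$ (i,i)))"
proof -
  define s where "s = B $$ (m,m) - (\<Sum>i<m. B $$ (m,i) * B $$ (i,m) / B $$ (i,i))"
  define Lm where "Lm = mat (Suc m) (Suc m) (\<lambda>(i,j). if i = j then 1 else if i = m \<and> j < m then B $$ (m,j) / B $$ (j,j) else (0::complex))"
  define Um where "Um = mat (Suc m) (Suc m) (\<lambda>(i,j). if i < m then B $$ (i,j) else if j = m then s else 0)"
  have cL: "Lm \<in> carrier_mat (Suc m) (Suc m)" and cU: "Um \<in> carrier_mat (Suc m) (Suc m)"
    unfolding Lm_def Um_def by auto
  have prodLU: "Lm * Um = B"
  proof (rule eq_matI)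
    fix i j assume i: "i < dim_row B" and j: "j < dim_col B"
    hence i': "i < Suc m" and j': "j < Suc m" using B by auto
    have "(Lm * Um) $$ (i,j) = (\<Sum>k\<in>{0..<Suc m}. Lm $$ (i,k) * Um $$ (k,j))"
      using i' j' cL cU by (simp add: scalar_prod_def)
    also have "\<dots> = (\<Sum>k<m. Lm $$ (i,k) * Um $$ (k,j)) + Lm $$ (i,m) * Um $$ (m,j)"
      by (simp add: lessThan_atLeast0)
    also have "\<dots> = B $$ (i,j)"
    proof (cases "i < m")
      case True
      have "(\<Sum>k<m. Lm $$ (i,k) * Um $$ (k,j)) = (\<Sum>k<m. if k = i then B $$ (i,j) else 0)"
        by (rule sum.cong) (use True j' in \<open>auto simp: Lm_def Um_def\<close>)
      also have "\<dots> = B $$ (i,j)" using True by simp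
      finally show ?thesis using True j' by (simp add: Lm_def)
    next
      case False
      hence im: "i = m" using i' by auto
      show ?thesis
      proof (cases "j < m")
        case True
        have "(\<Sum>k<m. Lm $$ (i,k) * Um $$ (k,j)) = (\<Sum>k<m. if k = j then B $$ (m,j) else 0)"
          by (rule sum.cong) (use True im dnz off in \<open>auto simp: Lm_def Um_def\<close>)
        also have "\<dots> = B $$ (m,j)" using True by simp
        finally show ?thesis using True im by (simp add: Lm_def Um_def)
      next
        case False
        hence jm: "j = m" using j' by auto
        have "(\<Sum>k<m. Lm $$ (i,k) * Um $$ (k,j)) = (\<Sum>k<m. B $$ (m,k) * B $$ (k,m) / B $$ (k,k))"
          by (rule sum.cong) (use im jm in \<open>auto simp: Lm_def Um_def\<close>)
        thus ?thesis using im jm by (simp add: Lm_def Um_def s_def)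
      qed
    qed
    finally show "(Lm * Um) $$ (i,j) = B $$ (i,j)" .
  qed (use B cL cU in auto)
  have dL: "det Lm = 1"
  proof -
    have "det Lm = prod_list (diag_mat Lm)"
      by (rule det_lower_triangular[OF _ cL]) (auto simp: Lm_def)
    also have "\<dots> = 1" unfolding prod_list_diag_prod using cL by (simp add: Lm_def)
    finally show ?thesis .
  qed
  have dU: "det Um = (\<Prod>i<m. B $$ (i,i)) * s"
  proof -
    have "upper_triangular Um" unfolding upper_triangular_def Um_def using off by auto
    hence "det Um = prod_list (diag_mat Um)" by (rule det_upper_triangular[OF _ cU])
    also have "\<dots> = (\<Prod>i\<in>{0..<Suc m}. Um $$ (i,i))" unfolding prod_list_diag_prod using cU by simp
    also have "\<dots> = (\<Prod>i<m. Um $$ (i,i)) * Um $$ (m,m)" by (simp add: lessThan_atLeast0)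
    also have "(\<Prod>i<m. Um $$ (i,i)) = (\<Prod>i<m. B $$ (i,i))" by (rule prod.cong) (auto simp: Um_def)
    finally show ?thesis by (simp add: Um_def)
  qed
  have "det B = det Lm * det Um" unfolding prodLU[symmetric] by (rule det_mult[OF cL cU])
  thus ?thesis using dL dU s_def by simp
qed

lemma poly_eq_cofinite:
  fixes p q :: "complex poly"
  assumes "finite F" "\<And>z. z \<notin> F \<Longrightarrow> poly p z = poly q z"
  shows "p = q"
proof (rule ccontr)
  assume "p \<noteq> q"
  hence "p - q \<noteq> 0" by simp
  hence "finite {z. poly (p - q) z = 0}" by (rule poly_roots_finite)
  moreover have "- F \<subseteq> {z. poly (p - q) z = 0}" using assms(2) by auto
  ultimately have "finite (- F)" by (rule finite_subset[rotated])
  hence "finite (UNIV :: complex set)" using assms(1) by (metis Compl_partition finite_Un)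
  thus False using infinite_UNIV_char_0 by blast
qed

locale arrw =
  fixes nu :: nat and a :: "nat \<Rightarrow> real" and c xi :: real
  assumes nu2: "2 \<le> nu" and xi0: "0 < xi"
begin

definition J :: "nat set" where "J = {1..<nu}"
definition as :: "real list" where "as = sorted_list_of_multiset (image_mset a (mset_set J))"
definition h :: "real \<Rightarrow> real" where "h y = y - c - (\<Sum>j\<in>J. 1 / (y - a j)) / xi"
definition inslot :: "nat \<Rightarrow> real \<Rightarrow> bool" where
  "inslot k y \<longleftrightarrow> (k = 0 \<or> as ! (k - 1) < y) \<and> (length as \<le> k \<or> y < as ! k)"
definition cslot :: "nat \<Rightarrow> bool" where
  "cslot k \<longleftrightarrow> 0 < k \<and> k < length as \<and> as ! (k - 1) = as ! k"
definition L :: "nat \<Rightarrow> real \<Rightarrow> real" where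
  "L k t = (if cslot k then as ! k else (THE y. inslot k y \<and> h y = t))"
definition rl :: "real \<Rightarrow> real list" where "rl t = map (\<lambda>k. L k t) [0..<nu]"

lemma finJ[simp]: "finite J" and cardJ: "card J = nu - 1"
  by (auto simp: J_def)

lemma mset_as: "mset as = image_mset a (mset_set J)"
  by (simp add: as_def)

lemma len_as: "length as = nu - 1"
  by (metis mset_as size_mset size_image_mset size_mset_set cardJ)

lemma sorted_as: "sorted as"
  by (simp add: as_def)

lemma set_as: "set as = a ` J"
  by (metis mset_as set_mset_mset set_image_mset finite_set_mset_mset_set finJ)

lemma count_as: "count (mset as) y = card {j\<in>J. a j = y}"
proof -
  have "count (mset as) y = count (image_mset a (mset_set J)) y" by (simp add: mset_as)
  also have "\<dots> = card {j\<in>J. a j = y}"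
    by (auto simp: count_image_mset' filter_mset_mset_set intro!: arg_cong[where f=card])
  finally show ?thesis .
qed

lemma count_as2: "count (mset as) y = card {i. i < length as \<and> as ! i = y}"
  by (rule count_mset_card)

lemma inslot_notin: assumes "inslot k y" "k \<le> length as" shows "y \<notin> set as"
proof
  assume "y \<in> set as"
  then obtain i where i: "i < length as" "as ! i = y" by (auto simp: in_set_conv_nth)
  show False
  proof (cases "i < k")
    case True
    hence "as ! i \<le> as ! (k - 1)" using sorted_as i assms(2)
      by (intro sorted_nth_mono) auto
    moreover have "as ! (k - 1) < y" using assms True unfolding inslot_def by auto
    ultimately show False using i by auto
  next
    case False
    hence "k < length as" using i by auto
    hence "y < as ! k" using assms unfolding inslot_def by auto
    moreover have "as ! k \<le> as ! i" using sorted_as i False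
      by (intro sorted_nth_mono) auto
    ultimately show False using i by auto
  qed
qed

lemma inslot_between: "inslot k y1 \<Longrightarrow> inslot k y2 \<Longrightarrow> y1 \<le> z \<Longrightarrow> z \<le> y2 \<Longrightarrow> inslot k z"
  unfolding inslot_def by auto

lemma h_mono: assumes "inslot k y1" "inslot k y2" "y1 < y2" "k \<le> length as" shows "h y1 < h y2"
proof -
  have "(\<Sum>j\<in>J. 1 / (y2 - a j)) \<le> (\<Sum>j\<in>J. 1 / (y1 - a j))"
  proof (rule sum_mono)
    fix j assume j: "j \<in> J"
    hence "a j \<in> set as" by (simp add: set_as)
    hence "\<not> (y1 \<le> a j \<and> a j \<le> y2)" using inslot_between[OF assms(1,2)] inslot_notin assms(4) by blast
    hence "a j < y1 \<or> y2 < a j" by auto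
    thus "1 / (y2 - a j) \<le> 1 / (y1 - a j)"
    proof
      assume "a j < y1" thus ?thesis using assms(3) by (intro divide_left_mono) auto
    next
      assume "y2 < a j" 
      hence "1 / (a j - y1) \<le> 1 / (a j - y2)" using assms(3) by (intro divide_left_mono) auto
      thus ?thesis by (smt (verit, ccfv_SIG) minus_divide_right)
    qed
  qed
  hence "(\<Sum>j\<in>J. 1 / (y2 - a j)) / xi \<le> (\<Sum>j\<in>J. 1 / (y1 - a j)) / xi"
    using xi0 by (intro divide_right_mono) auto
  thus ?thesis using assms(3) unfolding h_def by linarith
qed

lemma h_mono_iff: assumes "inslot k y1" "inslot k y2" "k \<le> length as" shows "h y1 \<le> h y2 \<longleftrightarrow> y1 \<le> y2"
  using h_mono[OF assms(1,2) _ assms(3)] h_mono[OF assms(2,1) _ assms(3)] by (cases y1 y2 rule: linorder_cases) auto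

lemma h_inj: assumes "inslot k y1" "inslot k y2" "h y1 = h y2" "k \<le> length as" shows "y1 = y2"
  using h_mono_iff[OF assms(1,2,4)] h_mono_iff[OF assms(2,1,4)] assms(3) by auto

lemma aJ_notin_slot: assumes "j \<in> J" "inslot k y" "k \<le> length as" shows "a j \<noteq> y"
  using inslot_notin[OF assms(2,3)] assms(1) set_as by auto

lemma exists_mid:
  assumes k: "0 < k" "k < length as" "\<not> cslot k"
  shows "\<exists>y. inslot k y \<and> h y = t"
proof -
  define lo where "lo = as ! (k - 1)"
  define up where "up = as ! k"
  have "lo \<le> up" unfolding lo_def up_def using sorted_as k by (intro sorted_nth_mono) auto
  moreover have "lo \<noteq> up" using k unfolding cslot_def lo_def up_def by auto
  ultimately have lu: "lo < up" by auto
  have ins: "inslot k y \<longleftrightarrow> lo < y \<and> y < up" for y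
    unfolding inslot_def lo_def up_def using k by auto
  have out: "a j \<notin> {lo<..<up}" if "j \<in> J" for j
    using aJ_notin_slot[OF that, of k] ins k by auto
  have lo_in: "lo \<in> a ` J" "up \<in> a ` J" unfolding lo_def up_def set_as[symmetric] using k by auto
  define g where "g j y = (if a j = lo then up - y else if a j = up then -(y - lo)
        else (y - lo) * (up - y) / (y - a j))" for j y
  define f where "f y = (y - lo) * (up - y) * (y - c - t) - (\<Sum>j\<in>J. g j y) / xi" for y
  have cg: "continuous_on {lo..up} (g j)" if j: "j \<in> J" for j
  proof (cases "a j = lo \<or> a j = up")
    case True
    hence "g j = (\<lambda>y. up - y) \<or> g j = (\<lambda>y. -(y - lo))" by (auto simp: g_def fun_eq_iff)
    thus ?thesis by (auto intro!: continuous_intros)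
  next
    case False
    hence "a j \<notin> {lo..up}" using out[OF j] by auto
    hence "\<forall>y\<in>{lo..up}. y - a j \<noteq> 0" by auto
    thus ?thesis using False unfolding g_def by (auto intro!: continuous_intros)
  qed
  have cf: "continuous_on {lo..up} f" unfolding f_def
    using cg xi0 by (auto intro!: continuous_intros)
  have "0 < (\<Sum>j\<in>J. g j lo)"
  proof -
    obtain j0 where "j0 \<in> J" "a j0 = lo" using lo_in by auto
    thus ?thesis using lu by (intro sum_pos2[of J j0]) (auto simp: g_def)
  qed
  hence flo: "f lo < 0" unfolding f_def using xi0 by (simp add: divide_pos_pos)
  have "0 < (\<Sum>j\<in>J. - g j up)"
  proof -
    obtain j0 where "j0 \<in> J" "a j0 = up" using lo_in by auto
    thus ?thesis using lu by (intro sum_pos2[of J j0]) (auto simp: g_def)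
  qed
  hence "(\<Sum>j\<in>J. g j up) < 0" by (simp add: sum_negf)
  hence fup: "0 < f up" unfolding f_def using xi0 by (simp add: divide_neg_pos)
  obtain y where y: "lo < y" "y < up" "f y = 0" using ivt_open[OF lu cf flo fup] by auto
  have "(\<Sum>j\<in>J. g j y) = (y - lo) * (up - y) * (\<Sum>j\<in>J. 1 / (y - a j))"
    unfolding sum_distrib_left
  proof (rule sum.cong[OF refl])
    fix j assume "j \<in> J"
    show "g j y = (y - lo) * (up - y) * (1 / (y - a j))"
      using y by (auto simp: g_def field_simps)
  qed
  hence "f y = (y - lo) * (up - y) * (h y - t)" unfolding f_def h_def using xi0 by (simp add: field_simps)
  moreover have "(y - lo) * (up - y) > 0" using y by auto
  ultimately have "h y = t" using y by auto
  thus ?thesis using ins y by auto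
qed

lemma len_pos: "0 < length as" using len_as nu2 by auto

lemma exists_top:
  assumes k: "k = length as"
  shows "\<exists>y. inslot k y \<and> h y = t"
proof -
  define lo where "lo = as ! (k - 1)"
  have ins: "inslot k y \<longleftrightarrow> lo < y" for y
    unfolding inslot_def lo_def using k len_pos by auto
  have le: "a j \<le> lo" if "j \<in> J" for j
  proof -
    have "a j \<in> set as" using that set_as by auto
    then obtain i where i: "i < length as" "as ! i = a j" by (auto simp: in_set_conv_nth)
    thus ?thesis unfolding lo_def using sorted_nth_mono[OF sorted_as, of i "k - 1"] k len_pos by auto
  qed
  have lo_in: "lo \<in> a ` J" unfolding lo_def set_as[symmetric] using k len_pos by auto
  define g where "g j y = (if a j = lo then 1 else (y - lo) / (y - a j))" for j y
  define f where "f y = (y - lo) * (y - c - t) - (\<Sum>j\<in>J. g j y) / xi" for y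
  define y2 where "y2 = max (lo + 1) (c + t + real (nu - 1) / xi + 1)"
  have lu: "lo < y2" unfolding y2_def by auto
  have cg: "continuous_on {lo..y2} (g j)" if j: "j \<in> J" for j
  proof (cases "a j = lo")
    case True
    hence "g j = (\<lambda>y. 1)" by (auto simp: g_def fun_eq_iff)
    thus ?thesis by (auto intro!: continuous_intros)
  next
    case False
    hence "a j < lo" using le[OF j] by auto
    hence "\<forall>y\<in>{lo..y2}. y - a j \<noteq> 0" by auto
    thus ?thesis using False unfolding g_def by (auto intro!: continuous_intros)
  qed
  have cf: "continuous_on {lo..y2} f" unfolding f_def
    using cg xi0 by (auto intro!: continuous_intros)
  have "0 < (\<Sum>j\<in>J. g j lo)"
  proof -
    obtain j0 where "j0 \<in> J" "a j0 = lo" using lo_in by auto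
    thus ?thesis by (intro sum_pos2[of J j0]) (auto simp: g_def)
  qed
  hence flo: "f lo < 0" unfolding f_def using xi0 by (simp add: divide_pos_pos)
  have feq: "f y = (y - lo) * (h y - t)" if "lo < y" for y
  proof -
    have "(\<Sum>j\<in>J. g j y) = (y - lo) * (\<Sum>j\<in>J. 1 / (y - a j))"
      unfolding sum_distrib_left
    proof (rule sum.cong[OF refl])
      fix j assume "j \<in> J"
      show "g j y = (y - lo) * (1 / (y - a j))"
        using that by (auto simp: g_def field_simps)
    qed
    thus ?thesis unfolding f_def h_def using xi0 by (simp add: field_simps)
  qed
  have "(\<Sum>j\<in>J. 1 / (y2 - a j)) \<le> (\<Sum>j\<in>J. 1)"
  proof (rule sum_mono)
    fix j assume "j \<in> J"
    moreover have "lo + 1 \<le> y2" unfolding y2_def by simp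
    ultimately have "1 \<le> y2 - a j" using le by fastforce
    thus "1 / (y2 - a j) \<le> 1" by simp
  qed
  hence "(\<Sum>j\<in>J. 1 / (y2 - a j)) / xi \<le> real (nu - 1) / xi"
    using xi0 cardJ by (intro divide_right_mono) auto
  hence "h y2 - t \<ge> 1" unfolding h_def y2_def by auto
  hence fup: "0 < f y2" using feq[OF lu] lu by auto
  obtain y where y: "lo < y" "y < y2" "f y = 0" using ivt_open[OF lu cf flo fup] by auto
  hence "h y = t" using feq[of y] by auto
  thus ?thesis using ins y by auto
qed

lemma exists_bot:
  assumes k: "k = 0"
  shows "\<exists>y. inslot k y \<and> h y = t"
proof -
  define up where "up = as ! 0"
  have ins: "inslot k y \<longleftrightarrow> y < up" for y
    unfolding inslot_def up_def using k len_pos by auto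
  have le: "up \<le> a j" if "j \<in> J" for j
  proof -
    have "a j \<in> set as" using that set_as by auto
    then obtain i where i: "i < length as" "as ! i = a j" by (auto simp: in_set_conv_nth)
    thus ?thesis unfolding up_def using sorted_nth_mono[OF sorted_as, of 0 i] by auto
  qed
  have up_in: "up \<in> a ` J" unfolding up_def set_as[symmetric] using len_pos by auto
  define g where "g j y = (if a j = up then -1 else (up - y) / (y - a j))" for j y
  define f where "f y = (up - y) * (y - c - t) - (\<Sum>j\<in>J. g j y) / xi" for y
  define y1 where "y1 = min (up - 1) (c + t - real (nu - 1) / xi - 1)"
  have lu: "y1 < up" unfolding y1_def by auto
  have cg: "continuous_on {y1..up} (g j)" if j: "j \<in> J" for j
  proof (cases "a j = up")
    case True
    hence "g j = (\<lambda>y. -1)" by (auto simp: g_def fun_eq_iff)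
    thus ?thesis by (auto intro!: continuous_intros)
  next
    case False
    hence "up < a j" using le[OF j] by auto
    hence "\<forall>y\<in>{y1..up}. y - a j \<noteq> 0" by auto
    thus ?thesis using False unfolding g_def by (auto intro!: continuous_intros)
  qed
  have cf: "continuous_on {y1..up} f" unfolding f_def
    using cg xi0 by (auto intro!: continuous_intros)
  have "0 < (\<Sum>j\<in>J. - g j up)"
  proof -
    obtain j0 where "j0 \<in> J" "a j0 = up" using up_in by auto
    thus ?thesis by (intro sum_pos2[of J j0]) (auto simp: g_def)
  qed
  hence "(\<Sum>j\<in>J. g j up) < 0" by (simp add: sum_negf)
  hence fup: "0 < f up" unfolding f_def using xi0 by (simp add: divide_neg_pos)
  have feq: "f y = (up - y) * (h y - t)" if "y < up" for y
  proof -
    have "(\<Sum>j\<in>J. g j y) = (up - y) * (\<Sum>j\<in>J. 1 / (y - a j))"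
      unfolding sum_distrib_left
    proof (rule sum.cong[OF refl])
      fix j assume "j \<in> J"
      show "g j y = (up - y) * (1 / (y - a j))"
        using that by (auto simp: g_def field_simps)
    qed
    thus ?thesis unfolding f_def h_def using xi0 by (simp add: field_simps)
  qed
  have "(\<Sum>j\<in>J. -1) \<le> (\<Sum>j\<in>J. 1 / (y1 - a j))"
  proof (rule sum_mono)
    fix j assume "j \<in> J"
    moreover have "y1 \<le> up - 1" unfolding y1_def by simp
    ultimately have "y1 - a j \<le> -1" using le by fastforce
    thus "-1 \<le> 1 / (y1 - a j)" by (simp add: field_simps)
  qed
  hence "- real (nu - 1) / xi \<le> (\<Sum>j\<in>J. 1 / (y1 - a j)) / xi"
    using xi0 cardJ by (intro divide_right_mono) auto
  hence "h y1 - t \<le> -1" unfolding h_def y1_def by auto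
  hence flo: "f y1 < 0" using feq[OF lu] lu by (simp add: mult_pos_neg)
  obtain y where y: "y1 < y" "y < up" "f y = 0" using ivt_open[OF lu cf flo fup] by auto
  hence "h y = t" using feq[of y] by auto
  thus ?thesis using ins y by auto
qed

lemma exists_slot: assumes "k \<le> length as" "\<not> cslot k" shows "\<exists>y. inslot k y \<and> h y = t"
proof -
  consider "k = 0" | "k = length as" | "0 < k" "k < length as" using assms by linarith
  thus ?thesis
  proof cases
    case 1 thus ?thesis by (rule exists_bot)
  next
    case 2 thus ?thesis by (rule exists_top)
  next
    case 3 thus ?thesis using exists_mid assms by blast
  qed
qed

lemma L_gap: assumes "k \<le> length as" "\<not> cslot k" shows "inslot k (L k t) \<and> h (L k t) = t"
proof -
  have "\<exists>!y. inslot k y \<and> h y = t"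
    using exists_slot[OF assms] h_inj[OF _ _ _ assms(1)] by blast
  hence "inslot k (THE y. inslot k y \<and> h y = t) \<and> h (THE y. inslot k y \<and> h y = t) = t"
    by (rule theI')
  thus ?thesis using assms(2) unfolding L_def by simp
qed

lemma L_gap_eq: assumes "k \<le> length as" "\<not> cslot k" "inslot k y" "h y = t" shows "L k t = y"
  using L_gap[OF assms(1,2), of t] h_inj[OF _ assms(3) _ assms(1)] assms(4) by auto

lemma L_const: "cslot k \<Longrightarrow> L k t = as ! k"
  unfolding L_def by simp

lemma L_strict: assumes "k \<le> length as" "\<not> cslot k" "t1 < t2" shows "L k t1 < L k t2"
proof -
  have 1: "inslot k (L k t1)" "h (L k t1) = t1" and 2: "inslot k (L k t2)" "h (L k t2) = t2"
    using L_gap[OF assms(1,2)] by auto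
  show ?thesis using h_mono_iff[OF 2(1) 1(1) assms(1)] 1 2 assms(3) by auto
qed

lemma L_mono: assumes "k \<le> length as" "t1 \<le> t2" shows "L k t1 \<le> L k t2"
  using L_strict[OF assms(1) _, of t1 t2] assms(2) L_const[of k]
  by (cases "cslot k"; cases "t1 = t2") auto

lemma L_le_as: assumes "k < length as" shows "L k t \<le> as ! k"
proof (cases "cslot k")
  case True thus ?thesis by (simp add: L_const)
next
  case False
  hence "inslot k (L k t)" using L_gap assms by auto
  thus ?thesis using assms unfolding inslot_def by auto
qed

lemma as_le_L: assumes "0 < k" "k \<le> length as" shows "as ! (k - 1) \<le> L k t"
proof (cases "cslot k")
  case True thus ?thesis using sorted_nth_mono[OF sorted_as, of "k-1" k] assms
    by (simp add: L_const cslot_def)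
next
  case False
  hence "inslot k (L k t)" using L_gap assms by auto
  thus ?thesis using assms unfolding inslot_def by auto
qed

lemma L_interlace: assumes "Suc k \<le> length as" shows "L k t1 \<le> L (Suc k) t2"
  using L_le_as[of k t1] as_le_L[of "Suc k" t2] assms by auto

lemma length_rl[simp]: "length (rl t) = nu" by (simp add: rl_def)
lemma nth_rl: "k < nu \<Longrightarrow> rl t ! k = L k t" by (simp add: rl_def)

lemma sorted_rl: "sorted (rl t)"
  unfolding sorted_iff_nth_Suc
proof (intro allI impI)
  fix i assume "Suc i < length (rl t)"
  hence "Suc i \<le> length as" using len_as by auto
  thus "rl t ! i \<le> rl t ! Suc i" using L_interlace[of i t t] len_as by (simp add: nth_rl)
qed

definition lin :: "real \<Rightarrow> complex poly" where "lin x = [:- complex_of_real x, 1:]"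
definition P :: "complex poly" where "P = (\<Prod>j\<in>J. lin (a j))"
definition pc :: "real \<Rightarrow> complex poly" where
  "pc t = lin (c + t) * P - Polynomial.smult (complex_of_real (1 / xi)) (pderiv P)"

lemma poly_lin[simp]: "poly (lin x) (complex_of_real y) = complex_of_real (y - x)"
  by (simp add: lin_def)

lemma coeff_lin1[simp]: "coeff (lin x) (Suc 0) = 1" by (simp add: lin_def)

lemma lin_nz[simp]: "lin x \<noteq> 0" and deg_lin[simp]: "degree (lin x) = 1"
  and lc_lin[simp]: "lead_coeff (lin x) = 1" and pderiv_lin[simp]: "pderiv (lin x) = 1"
  by (auto simp: lin_def pderiv_pCons)

lemma poly_P: "poly P (complex_of_real y) = complex_of_real (\<Prod>j\<in>J. y - a j)"
  by (simp add: P_def poly_prod)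

lemma degree_P: "degree P = nu - 1" and lc_P: "lead_coeff P = 1" and P_nz: "P \<noteq> 0"
proof -
  show "degree P = nu - 1" unfolding P_def
    by (subst degree_prod_eq_sum_degree) (auto simp: cardJ)
  show "lead_coeff P = 1" unfolding P_def by (simp add: lead_coeff_prod)
  thus "P \<noteq> 0" by auto
qed

lemma poly_pderivP: assumes "y \<notin> a ` J"
  shows "poly (pderiv P) (complex_of_real y) =
    complex_of_real ((\<Prod>j\<in>J. y - a j) * (\<Sum>j\<in>J. 1 / (y - a j)))"
proof -
  have "poly (pderiv P) (complex_of_real y) = (\<Sum>j\<in>J. \<Prod>i\<in>J - {j}. complex_of_real (y - a i))"
    unfolding P_def pderiv_prod by (simp add: poly_sum poly_prod)
  also have "\<dots> = complex_of_real (\<Sum>j\<in>J. (\<Prod>i\<in>J. y - a i) * (1 / (y - a j)))"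
    unfolding of_real_sum of_real_prod
  proof (rule sum.cong[OF refl])
    fix j assume j: "j \<in> J"
    have nz: "y - a j \<noteq> 0" using assms j by auto
    have "(\<Prod>i\<in>J. y - a i) = (y - a j) * (\<Prod>i\<in>J - {j}. y - a i)"
      using j by (simp add: prod.remove)
    thus "(\<Prod>i\<in>J - {j}. complex_of_real (y - a i)) =
          complex_of_real ((\<Prod>i\<in>J. y - a i) * (1 / (y - a j)))"
      using nz by (simp add: of_real_prod[symmetric])
  qed
  finally show ?thesis by (simp add: sum_distrib_left)
qed

lemma poly_pc: assumes "y \<notin> a ` J"
  shows "poly (pc t) (complex_of_real y) = complex_of_real ((\<Prod>j\<in>J. y - a j) * (h y - t))"
proof -
  have "poly (pc t) (complex_of_real y) = complex_of_real ((y - (c + t)) * (\<Prod>j\<in>J. y - a j)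
     - (1 / xi) * ((\<Prod>j\<in>J. y - a j) * (\<Sum>j\<in>J. 1 / (y - a j))))"
    unfolding pc_def using poly_pderivP[OF assms] by (simp add: poly_P)
  also have "\<dots> = complex_of_real ((\<Prod>j\<in>J. y - a j) * (h y - t))"
    unfolding h_def by (simp add: algebra_simps)
  finally show ?thesis .
qed

lemma degree_pc: "degree (pc t) = nu" and lc_pc: "lead_coeff (pc t) = 1" and pc_nz: "pc t \<noteq> 0"
proof -
  have dA: "degree (lin (c + t) * P) = nu" using degree_P nu2
    by (subst degree_mult_eq) (auto simp: P_nz)
  have lA: "lead_coeff (lin (c + t) * P) = 1" by (simp add: lead_coeff_mult lc_P)
  have dB: "degree (- Polynomial.smult (complex_of_real (1 / xi)) (pderiv P)) < nu"
    using degree_smult_le[of "complex_of_real (1 / xi)" "pderiv P"] degree_pderiv[of P] degree_P nu2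
    by simp
  have eq: "pc t = lin (c + t) * P + - Polynomial.smult (complex_of_real (1 / xi)) (pderiv P)"
    unfolding pc_def by simp
  show d: "degree (pc t) = nu" unfolding eq using dA dB by (subst degree_add_eq_left) auto
  have "coeff (- Polynomial.smult (complex_of_real (1 / xi)) (pderiv P)) nu = 0"
    using dB by (intro coeff_eq_0) auto
  thus "lead_coeff (pc t) = 1" unfolding d unfolding eq coeff_add using lA dA by simp
  thus "pc t \<noteq> 0" by auto
qed

lemma order_pc: assumes "z \<in> a ` J"
  shows "order (complex_of_real z) (pc t) = card {j\<in>J. a j = z} - 1"
proof -
  define K where "K = {j\<in>J. a j = z}"
  have fK: "finite K" unfolding K_def by auto
  have "K \<noteq> {}" using assms unfolding K_def by auto
  hence "card K > 0" using fK by auto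
  then obtain k' where k': "card K = Suc k'" using gr0_implies_Suc by blast
  define S where "S = (\<Prod>j\<in>J - K. lin (a j))"
  have "P = (\<Prod>j\<in>K. lin (a j)) * S" unfolding P_def S_def
    by (subst prod.subset_diff[of K J]) (auto simp: K_def mult.commute)
  also have "(\<Prod>j\<in>K. lin (a j)) = lin z ^ card K"
    by (simp add: K_def)
  finally have PS: "P = lin z ^ Suc k' * S" using k' by simp
  have "poly S (complex_of_real z) = complex_of_real (\<Prod>j\<in>J - K. z - a j)"
    by (simp add: S_def poly_prod)
  moreover have "(\<Prod>j\<in>J - K. z - a j) \<noteq> 0" by (auto simp: K_def)
  ultimately have Sz: "poly S (complex_of_real z) \<noteq> 0" by simp
  define W where "W = lin (c + t) * lin z * S - Polynomial.smult (complex_of_real (1 / xi))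
      (lin z * pderiv S + Polynomial.smult (of_nat (Suc k')) S)"
  have "pderiv P = lin z ^ Suc k' * pderiv S + S * (Polynomial.smult (of_nat (Suc k')) (lin z ^ k'))"
    unfolding PS pderiv_mult pderiv_power_Suc by simp
  hence pcW: "pc t = lin z ^ k' * W" unfolding pc_def W_def PS
    by (simp add: algebra_simps smult_add_right mult_smult_left mult_smult_right power_Suc)
  have "poly W (complex_of_real z) = - (complex_of_real (1 / xi) * (of_nat (Suc k') * poly S (complex_of_real z)))"
    unfolding W_def by simp
  moreover have "complex_of_real (1 / xi) \<noteq> 0" using xi0 by simp
  ultimately have Wz: "poly W (complex_of_real z) \<noteq> 0" using Sz by (simp del: of_nat_Suc)
  have "order (complex_of_real z) (pc t) = order (complex_of_real z) (lin z ^ k') + order (complex_of_real z) W"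
    unfolding pcW by (rule order_mult) (use pc_nz pcW in metis)
  also have "\<dots> = k'" using Wz by (simp add: lin_def order_power_n_n order_0I)
  finally show ?thesis using k' unfolding K_def by simp
qed

lemma count_rl: "count (mset (rl t)) y = card {k. k < nu \<and> L k t = y}"
  unfolding count_mset_card length_rl by (rule arg_cong[where f=card]) (auto simp: nth_rl)

lemma count_rl_le_order: "count (mset (rl t)) y \<le> order (complex_of_real y) (pc t)"
proof (cases "y \<in> a ` J")
  case True
  define I where "I = {i. i < length as \<and> as ! i = y}"
  have fI: "finite I" unfolding I_def by auto
  have "{k. k < nu \<and> L k t = y} \<subseteq> I - {Min I}"
  proof
    fix k assume "k \<in> {k. k < nu \<and> L k t = y}"
    hence k: "k < nu" "L k t = y" by auto
    have kl: "k \<le> length as" using k len_as by auto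
    have cs: "cslot k"
    proof (rule ccontr)
      assume "\<not> cslot k"
      hence "inslot k y" using L_gap[OF kl] k by auto
      thus False using inslot_notin[OF _ kl] True set_as by auto
    qed
    hence "k \<in> I" "k - 1 \<in> I" using k L_const[of k t] unfolding I_def cslot_def by auto
    hence "Min I \<le> k - 1" using fI by auto
    moreover have "0 < k" using cs unfolding cslot_def by auto
    ultimately show "k \<in> I - {Min I}" using \<open>k \<in> I\<close> by auto
  qed
  hence "card {k. k < nu \<and> L k t = y} \<le> card (I - {Min I})"
    using fI by (intro card_mono) auto
  also have "\<dots> = card I - 1"
  proof -
    have "I \<noteq> {}" using True set_as unfolding I_def by (auto simp: in_set_conv_nth)
    thus ?thesis using fI by (simp add: card_Diff_singleton)
  qed
  also have "card I = card {j\<in>J. a j = y}" using count_as count_as2 unfolding I_def by simp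
  finally show ?thesis using order_pc[OF True, of t] count_rl by simp
next
  case False
  define S where "S = {k. k < nu \<and> L k t = y}"
  have gap: "\<not> cslot k \<and> inslot k y \<and> h y = t" if "k \<in> S" for k
  proof -
    have k: "k < nu" "L k t = y" using that unfolding S_def by auto
    have kl: "k \<le> length as" using k len_as by auto
    have "\<not> cslot k" using False L_const[of k t] k set_as
      by (metis cslot_def image_eqI nth_mem) 
    thus ?thesis using L_gap[OF kl] k by auto
  qed
  show ?thesis
  proof (cases "S = {}")
    case True 
    have "count (mset (rl t)) y = 0" using count_rl[of t y] True unfolding S_def by (metis card.empty)
    thus ?thesis by (metis le0)
  next
    case ne: False
    then obtain k where k: "k \<in> S" by auto
    have "S \<subseteq> {k}"
    proof
      fix k2 assume k2: "k2 \<in> S"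
      have lt: False if "k1 \<in> S" "k3 \<in> S" "k1 < k3" for k1 k3
      proof -
        have "k3 < nu" using that unfolding S_def by auto
        hence "k1 < length as" using that len_as by auto
        have "y < as ! k1" using gap[OF that(1)] \<open>k1 < length as\<close> unfolding inslot_def by auto
        moreover have "as ! (k3 - 1) < y" using gap[OF that(2)] that(3) unfolding inslot_def by auto
        moreover have "as ! k1 \<le> as ! (k3 - 1)" using sorted_as that(3) \<open>k3 < nu\<close> len_as
          by (intro sorted_nth_mono) auto
        ultimately show False by auto
      qed
      show "k2 \<in> {k}" using lt[OF k k2] lt[OF k2 k] by (cases k k2 rule: linorder_cases) auto
    qed
    hence "card S \<le> 1" using card_mono[of "{k}" S] by auto
    moreover have "poly (pc t) (complex_of_real y) = 0" using poly_pc[OF False] gap[OF k] by simp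
    hence "order (complex_of_real y) (pc t) \<noteq> 0" using pc_nz order_root by blast
    ultimately show ?thesis using count_rl unfolding S_def by simp
  qed
qed

theorem roots_pc: "image_mset complex_of_real (mset (rl t)) = proots (pc t)"
proof (rule subset_size_eq)
  show "image_mset complex_of_real (mset (rl t)) \<subseteq># proots (pc t)"
    unfolding subseteq_mset_def
  proof
    fix z
    show "count (image_mset complex_of_real (mset (rl t))) z \<le> count (proots (pc t)) z"
    proof (cases "z \<in> range complex_of_real")
      case True
      then obtain y where y: "z = complex_of_real y" by auto
      have "inj complex_of_real" by (simp add: inj_def)
      show ?thesis unfolding y count_proots[OF pc_nz] count_image_inj[OF \<open>inj _\<close>]
        by (rule count_rl_le_order)
    next
      case False
      hence "count (image_mset complex_of_real (mset (rl t))) z = 0" by (auto simp: count_eq_zero_iff)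
      thus ?thesis by simp
    qed
  qed
  show "size (proots (pc t)) \<le> size (image_mset complex_of_real (mset (rl t)))"
    by (simp add: size_proots_complex degree_pc)
qed

lemma eigs_rl: "image_mset Re (proots (pc t)) = mset (rl t)"
  unfolding roots_pc[symmetric] by (simp add: multiset.map_comp o_def)

lemma sorted_eigs: "sorted_list_of_multiset (image_mset Re (proots (pc t))) = rl t"
  unfolding eigs_rl sorted_list_of_multiset_mset using sorted_rl by (simp add: sorted_sort_id)

lemma nth_eigs: "1 \<le> n \<Longrightarrow> n \<le> nu \<Longrightarrow>
   sorted_list_of_multiset (image_mset Re (proots (pc t))) ! (n - 1) = L (n - 1) t"
  unfolding sorted_eigs by (simp add: nth_rl)

lemma count_eigs: assumes "y \<in> a ` J"
  shows "count (image_mset Re (proots (pc t))) y = card {j\<in>J. a j = y} - 1"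
proof -
  have "inj complex_of_real" by (simp add: inj_def)
  have "count (mset (rl t)) y = count (proots (pc t)) (complex_of_real y)"
    unfolding roots_pc[symmetric] count_image_inj[OF \<open>inj _\<close>] ..
  also have "\<dots> = card {j\<in>J. a j = y} - 1" using order_pc[OF assms] pc_nz by simp
  finally show ?thesis unfolding eigs_rl .
qed

lemma coeff_pc_sum: "coeff (pc t) (nu - 1) = - complex_of_real (\<Sum>k<nu. L k t)"
proof -
  have "pc t = (\<Prod>x\<in>#proots (pc t). [:-x, 1:])"
    using complex_poly_decompose_multiset[of "pc t"] lc_pc by simp
  hence "coeff (pc t) (nu - 1) = - sum_mset (proots (pc t))"
    using vieta_aux[of "proots (pc t)"] size_proots_complex[of "pc t"] degree_pc nu2 by simp
  also have "sum_mset (proots (pc t)) = complex_of_real (sum_list (rl t))"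
    unfolding roots_pc[symmetric] by (rule sum_mset_of_real_list)
  also have "sum_list (rl t) = (\<Sum>k<nu. L k t)"
    unfolding rl_def by (simp add: sum_list_sum_nth lessThan_atLeast0)
  finally show ?thesis .
qed

lemma sum_L_diff: "(\<Sum>k<nu. L k t2) - (\<Sum>k<nu. L k t1) = t2 - t1"
proof -
  have "pc t2 - pc t1 = (lin (c + t2) - lin (c + t1)) * P" unfolding pc_def by (simp add: algebra_simps)
  also have "lin (c + t2) - lin (c + t1) = [: complex_of_real (t1 - t2) :]" by (simp add: lin_def)
  finally have "coeff (pc t2 - pc t1) (nu - 1) = complex_of_real (t1 - t2) * coeff P (nu - 1)"
    by (simp add: mult_pCons_left)
  hence "coeff (pc t2) (nu - 1) - coeff (pc t1) (nu - 1) = complex_of_real (t1 - t2) * coeff P (nu - 1)"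
    by simp
  also have "coeff P (nu - 1) = 1" using lc_P degree_P by simp
  finally have "complex_of_real ((\<Sum>k<nu. L k t2) - (\<Sum>k<nu. L k t1)) = complex_of_real (t2 - t1)"
    unfolding coeff_pc_sum by (simp add: algebra_simps)
  thus ?thesis by (simp only: of_real_eq_iff)
qed

lemma L_image: assumes "k < nu" "0 \<le> T" shows "L k ` {-T..T} = {L k (-T)..L k T}"
proof (cases "cslot k")
  case True
  hence "L k = (\<lambda>_. as ! k)" by (intro ext) (simp add: L_const)
  thus ?thesis using assms by (simp add: image_constant_conv)
next
  case False
  have kl: "k \<le> length as" using assms len_as by auto
  show ?thesis
  proof
    show "L k ` {-T..T} \<subseteq> {L k (-T)..L k T}" using L_mono[OF kl] by auto
    show "{L k (-T)..L k T} \<subseteq> L k ` {-T..T}"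
    proof
      fix y assume y: "y \<in> {L k (-T)..L k T}"
      have g1: "inslot k (L k (-T))" "h (L k (-T)) = -T" and g2: "inslot k (L k T)" "h (L k T) = T"
        using L_gap[OF kl False] by auto
      have iy: "inslot k y" using inslot_between[OF g1(1) g2(1)] y by auto
      have "h y \<in> {-T..T}" using h_mono_iff[OF g1(1) iy kl] h_mono_iff[OF iy g2(1) kl] y g1 g2 by auto
      moreover have "L k (h y) = y" using L_gap_eq[OF kl False iy refl] .
      ultimately show "y \<in> L k ` {-T..T}" by force
    qed
  qed
qed

lemma L_nondeg: assumes "k < nu" "\<not> cslot k" "0 < T" shows "L k (-T) < L k T"
  using L_strict[OF _ assms(2)] assms len_as by auto

lemma L_chain: assumes "i < j" "j < nu" shows "L i t1 \<le> L j t2"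
proof -
  have "L i t1 \<le> as ! i" using L_le_as assms len_as by auto
  also have "as ! i \<le> as ! (j - 1)" using assms len_as by (intro sorted_nth_mono[OF sorted_as]) auto
  also have "as ! (j - 1) \<le> L j t2" using as_le_L assms len_as by auto
  finally show ?thesis .
qed

lemma measure_spec: assumes "0 \<le> T"
  shows "emeasure lborel (\<Union>k<nu. {L k (-T)..L k T}) = ennreal (2 * T)"
proof -
  have "emeasure lborel (\<Union>k<nu. {L k (-T)..L k T}) = ennreal (\<Sum>k<nu. L k T - L k (-T))"
    using assms len_as by (intro measure_union_intervals L_chain L_mono) auto
  also have "(\<Sum>k<nu. L k T - L k (-T)) = 2 * T"
    using sum_L_diff[of T "-T"] by (simp add: sum_subtractf)
  finally show ?thesis .
qed

end


context arrw begin

lemma poly_pc_complex: assumes z: "z \<notin> complex_of_real ` a ` J"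
  shows "poly (pc t) z = (\<Prod>j\<in>J. z - complex_of_real (a j)) *
     ((z - complex_of_real (c + t)) - (\<Sum>j\<in>J. complex_of_real (1 / xi) / (z - complex_of_real (a j))))"
proof -
  have pl: "poly (lin x) z = z - complex_of_real x" for x by (simp add: lin_def)
  have "poly (pderiv P) z = (\<Sum>j\<in>J. \<Prod>i\<in>J - {j}. z - complex_of_real (a i))"
    unfolding P_def pderiv_prod by (simp add: poly_sum poly_prod pl)
  also have "\<dots> = (\<Sum>j\<in>J. (\<Prod>i\<in>J. z - complex_of_real (a i)) / (z - complex_of_real (a j)))"
  proof (rule sum.cong[OF refl])
    fix j assume j: "j \<in> J"
    have nz: "z - complex_of_real (a j) \<noteq> 0" using z j by auto
    have "(\<Prod>i\<in>J. z - complex_of_real (a i)) = (z - complex_of_real (a j)) * (\<Prod>i\<in>J - {j}. z - complex_of_real (a i))"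
      using j by (simp add: prod.remove)
    thus "(\<Prod>i\<in>J - {j}. z - complex_of_real (a i)) = (\<Prod>i\<in>J. z - complex_of_real (a i)) / (z - complex_of_real (a j))"
      using nz by simp
  qed
  finally have pd: "poly (pderiv P) z = (\<Prod>i\<in>J. z - complex_of_real (a i)) * (\<Sum>j\<in>J. 1 / (z - complex_of_real (a j)))"
    by (simp add: sum_distrib_left)
  have pP: "poly P z = (\<Prod>j\<in>J. z - complex_of_real (a j))" unfolding P_def by (simp add: poly_prod pl)
  have e1: "poly (pc t) z = (z - complex_of_real (c + t)) * poly P z - complex_of_real (1 / xi) * poly (pderiv P) z"
    unfolding pc_def by (simp add: pl)
  have e2: "(\<Sum>j\<in>J. complex_of_real (1 / xi) / (z - complex_of_real (a j))) =
      complex_of_real (1 / xi) * (\<Sum>j\<in>J. 1 / (z - complex_of_real (a j)))"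
    by (simp add: sum_distrib_left)
  show ?thesis unfolding e1 e2 pd pP by (simp add: algebra_simps)
qed

lemma char_poly_arrow:
  fixes M :: "complex mat"
  assumes cM: "M \<in> carrier_mat nu nu"
    and pp: "\<And>i j. i < nu - 1 \<Longrightarrow> j < nu - 1 \<Longrightarrow> M $$ (i,j) = (if i = j then complex_of_real (a (Suc i)) else 0)"
    and pcn: "\<And>i. i < nu - 1 \<Longrightarrow> M $$ (i, nu - 1) = complex_of_real (- 1 / sqrt xi)"
    and cpn: "\<And>i. i < nu - 1 \<Longrightarrow> M $$ (nu - 1, i) = complex_of_real (- 1 / sqrt xi)"
    and cc: "M $$ (nu - 1, nu - 1) = complex_of_real (c + t)"
  shows "char_poly M = pc t"
proof (rule poly_eq_cofinite[of "complex_of_real ` a ` J"])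
  show "finite (complex_of_real ` a ` J)" by simp
  fix z assume z: "z \<notin> complex_of_real ` a ` J"
  define m where "m = nu - 1"
  have nu: "nu = Suc m" using nu2 unfolding m_def by auto
  define B where "B = - char_matrix M z"
  have cB: "B \<in> carrier_mat (Suc m) (Suc m)" unfolding B_def using cM nu by auto
  have Bij: "B $$ (i,j) = (if i = j then z else 0) - M $$ (i,j)" if "i < Suc m" "j < Suc m" for i j
    unfolding B_def char_matrix_def using cM nu that by auto
  have Jm: "J = Suc ` {..<m}" unfolding J_def m_def
  proof (rule equalityI)
    show "{1..<nu} \<subseteq> Suc ` {..<nu - 1}"
    proof
      fix x assume "x \<in> {1..<nu}" thus "x \<in> Suc ` {..<nu - 1}" by (intro image_eqI[of _ _ "x - 1"]) auto
    qed
  qed auto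
  have injS: "inj_on Suc {..<m}" by auto
  have dnz: "B $$ (i,i) \<noteq> 0" if "i < m" for i
  proof -
    have "Suc i \<in> J" using that Jm by auto
    hence "z \<noteq> complex_of_real (a (Suc i))" using z by auto
    thus ?thesis using Bij[of i i] pp[of i i] that unfolding m_def by auto
  qed
  have "poly (char_poly M) z = det B" unfolding B_def by (rule char_poly_matrix[OF cM])
  also have "\<dots> = (\<Prod>i<m. B $$ (i,i)) * (B $$ (m,m) - (\<Sum>i<m. B $$ (m,i) * B $$ (i,m) / B $$ (i,i)))"
    by (rule det_arrow[OF cB _ dnz]) (auto simp: Bij pp m_def)
  also have "(\<Prod>i<m. B $$ (i,i)) = (\<Prod>j\<in>J. z - complex_of_real (a j))"
    unfolding Jm prod.reindex[OF injS] by (rule prod.cong) (auto simp: Bij pp m_def)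
  also have "B $$ (m,m) = z - complex_of_real (c + t)" using Bij[of m m] cc unfolding m_def by simp
  also have "(\<Sum>i<m. B $$ (m,i) * B $$ (i,m) / B $$ (i,i)) =
      (\<Sum>i<m. complex_of_real (1 / xi) / (z - complex_of_real (a (Suc i))))"
  proof (rule sum.cong[OF refl])
    fix i assume i: "i \<in> {..<m}"
    have b1: "B $$ (m,i) = complex_of_real (1 / sqrt xi)" using Bij[of m i] cpn[of i] i unfolding m_def by auto
    have b2: "B $$ (i,m) = complex_of_real (1 / sqrt xi)" using Bij[of i m] pcn[of i] i unfolding m_def by auto
    have "B $$ (m,i) * B $$ (i,m) = complex_of_real ((1 / sqrt xi) * (1 / sqrt xi))"
      unfolding b1 b2 of_real_mult ..
    also have "(1 / sqrt xi) * (1 / sqrt xi) = 1 / xi" using xi0 by (simp add: real_sqrt_mult[symmetric])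
    finally show "B $$ (m,i) * B $$ (i,m) / B $$ (i,i) = complex_of_real (1 / xi) / (z - complex_of_real (a (Suc i)))"
      using Bij[of i i] pp[of i i] i unfolding m_def by auto
  qed
  also have "\<dots> = (\<Sum>j\<in>J. complex_of_real (1 / xi) / (z - complex_of_real (a j)))"
    unfolding Jm sum.reindex[OF injS] by simp
  finally show "poly (char_poly M) z = poly (pc t) z" using poly_pc_complex[OF z] by simp
qed

end



lemma sum_filter_img:
  "finite S \<Longrightarrow> (\<Sum>e\<in>#filter_mset P (image_mset g (mset_set S)). F e) = (\<Sum>x\<in>{x\<in>S. P (g x)}. F (g x))"
  by (simp add: filter_mset_image_mset filter_mset_mset_set sum_unfold_sum_mset multiset.map_comp o_def)

lemma size_filter_img:
  "finite S \<Longrightarrow> size (filter_mset P (image_mset g (mset_set S))) = card {x\<in>S. P (g x)}"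
  by (simp add: filter_mset_image_mset filter_mset_mset_set)

lemma Gam_sum:
  fixes F :: "'d::finite oedge \<Rightarrow> complex"
  shows "(\<Sum>e\<in>#filter_mset P (Gam \<nu> :: 'd oedge multiset). F e) =
    (\<Sum>j\<in>{j\<in>{1..<\<nu>}. P (j, \<nu>, 0)}. F (j, \<nu>, 0)) + (\<Sum>j\<in>{j\<in>{1..<\<nu>}. P (\<nu>, j, 0)}. F (\<nu>, j, 0))
    + (\<Sum>s\<in>{s\<in>UNIV. P (\<nu>, \<nu>, axis s 1)}. F (\<nu>, \<nu>, axis s 1))
    + (\<Sum>s\<in>{s\<in>UNIV. P (\<nu>, \<nu>, - axis s 1)}. F (\<nu>, \<nu>, - axis s 1))"
  unfolding Gam_def by (simp add: sum_filter_img)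

lemma Gam_size:
  "size (filter_mset P (Gam \<nu> :: 'd::finite oedge multiset)) =
    card {j\<in>{1..<\<nu>}. P (j, \<nu>, 0)} + card {j\<in>{1..<\<nu>}. P (\<nu>, j, 0)}
    + card {s\<in>(UNIV :: 'd set). P (\<nu>, \<nu>, axis s 1)}
    + card {s\<in>(UNIV :: 'd set). P (\<nu>, \<nu>, - axis s 1)}"
  unfolding Gam_def by (simp add: size_filter_img)

lemma kappa_pend: "j \<in> {1..<\<nu>} \<Longrightarrow> kappa (Gam \<nu> :: 'd::finite oedge multiset) j = 1"
proof -
  assume j: "j \<in> {1..<\<nu>}"
  have "{j'\<in>{1..<\<nu>}. j' = j} = {j}" using j by auto
  thus ?thesis unfolding kappa_def Gam_size using j by (simp add: esrc_def)
qed

lemma kappa_center: "kappa (Gam \<nu> :: 'd::finite oedge multiset) \<nu> = \<nu> - 1 + 2 * CARD('d)"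
proof -
  have "{j. j = \<nu> \<and> Suc 0 \<le> j \<and> j < \<nu>} = {}" by auto
  moreover have "{j. Suc 0 \<le> j \<and> j < \<nu>} = {1..<\<nu>}" by auto
  ultimately show ?thesis unfolding kappa_def Gam_size by (simp add: esrc_def)
qed

lemma pair_axis: "pair_idx (axis s (1::int)) \<theta> = \<theta> $ s" "pair_idx (- axis s (1::int)) \<theta> = - \<theta> $ s"
  "pair_idx (0::int^'d::finite) \<theta> = 0"
proof -
  have 1: "of_int (axis s (1::int) $ i) * \<theta> $ i = (if i = s then \<theta> $ i else 0)" for i
    by (simp add: axis_def)
  have 2: "of_int ((- axis s (1::int)) $ i) * \<theta> $ i = (if i = s then - \<theta> $ i else 0)" for i
    by (simp add: axis_def)
  show "pair_idx (axis s (1::int)) \<theta> = \<theta> $ s" "pair_idx (- axis s (1::int)) \<theta> = - \<theta> $ s"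
    "pair_idx (0::int^'d::finite) \<theta> = 0"
    unfolding pair_idx_def 1 2 by simp_all
qed

lemma cis_pm: "cis x + cis (- x) = complex_of_real (2 * cos x)"
  by (simp add: complex_eq_iff)

definition tt :: "nat \<Rightarrow> real ^ 'd::finite \<Rightarrow> real" where
  "tt \<nu> \<theta> = - 2 * (\<Sum>s\<in>UNIV. cos (\<theta> $ s)) / real (\<nu> - 1 + 2 * CARD('d))"

lemma fiber_mat_props:
  fixes Q :: "nat \<Rightarrow> real" and \<theta> :: "real ^ 'd::finite"
  assumes nu2: "2 \<le> \<nu>"
  defines "M \<equiv> fiber_mat \<nu> (Gam \<nu> :: 'd oedge multiset) Q \<theta>"
  defines "\<xi> \<equiv> real (\<nu> - 1 + 2 * CARD('d))"
  shows "M \<in> carrier_mat \<nu> \<nu>"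
    and "\<And>i j. i < \<nu> - 1 \<Longrightarrow> j < \<nu> - 1 \<Longrightarrow> M $$ (i,j) = (if i = j then complex_of_real (1 + Q (Suc i)) else 0)"
    and "\<And>i. i < \<nu> - 1 \<Longrightarrow> M $$ (i, \<nu> - 1) = complex_of_real (- 1 / sqrt \<xi>)"
    and "\<And>i. i < \<nu> - 1 \<Longrightarrow> M $$ (\<nu> - 1, i) = complex_of_real (- 1 / sqrt \<xi>)"
    and "M $$ (\<nu> - 1, \<nu> - 1) = complex_of_real (1 + Q \<nu> + tt \<nu> \<theta>)"
proof -
  let ?G = "Gam \<nu> :: 'd oedge multiset"
  have Mij: "M $$ (i,j) = fiber_entry ?G Q \<theta> (Suc i) (Suc j)" if "i < \<nu>" "j < \<nu>" for i j
    unfolding M_def fiber_mat_def using that by simp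
  have kc: "real (kappa ?G \<nu>) = \<xi>" unfolding kappa_center \<xi>_def ..
  have xi0: "0 < \<xi>" unfolding \<xi>_def using nu2 by auto
  show "M \<in> carrier_mat \<nu> \<nu>" unfolding M_def fiber_mat_def by simp
  show "M $$ (i,j) = (if i = j then complex_of_real (1 + Q (Suc i)) else 0)"
    if "i < \<nu> - 1" "j < \<nu> - 1" for i j
  proof -
    have "(\<Sum>e\<in>#filter_mset (\<lambda>e. esrc e = Suc i \<and> etgt e = Suc j) ?G. cis (pair_idx (eidx e) \<theta>)) = 0"
    proof -
      have "\<nu> \<noteq> Suc i" "\<nu> \<noteq> Suc j" using that by auto
      thus ?thesis unfolding Gam_sum by (simp add: esrc_def etgt_def)
    qed
    thus ?thesis using that Mij[of i j] unfolding fiber_entry_def by auto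
  qed
  show "M $$ (i, \<nu> - 1) = complex_of_real (- 1 / sqrt \<xi>)" if "i < \<nu> - 1" for i
  proof -
    have "{j\<in>{1..<\<nu>}. esrc (j, \<nu>, 0::int^'d) = Suc i \<and> etgt (j, \<nu>, 0::int^'d) = \<nu>} = {Suc i}"
      using that by (auto simp: esrc_def etgt_def)
    hence "(\<Sum>e\<in>#filter_mset (\<lambda>e. esrc e = Suc i \<and> etgt e = \<nu>) ?G. cis (pair_idx (eidx e) \<theta>)) = 1"
      unfolding Gam_sum using that by (simp add: esrc_def etgt_def eidx_def pair_axis)
    moreover have "kappa ?G (Suc i) = 1" using that by (intro kappa_pend) auto
    ultimately show ?thesis using that Mij[of i "\<nu> - 1"] kc unfolding fiber_entry_def by simp
  qed
  show "M $$ (\<nu> - 1, i) = complex_of_real (- 1 / sqrt \<xi>)" if "i < \<nu> - 1" for i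
  proof -
    have "{j\<in>{1..<\<nu>}. esrc (\<nu>, j, 0::int^'d) = \<nu> \<and> etgt (\<nu>, j, 0::int^'d) = Suc i} = {Suc i}"
      using that by (auto simp: esrc_def etgt_def)
    hence "(\<Sum>e\<in>#filter_mset (\<lambda>e. esrc e = \<nu> \<and> etgt e = Suc i) ?G. cis (pair_idx (eidx e) \<theta>)) = 1"
      unfolding Gam_sum using that by (simp add: esrc_def etgt_def eidx_def pair_axis)
    moreover have "kappa ?G (Suc i) = 1" using that by (intro kappa_pend) auto
    ultimately show ?thesis using that Mij[of "\<nu> - 1" i] kc nu2 unfolding fiber_entry_def by simp
  qed
  show "M $$ (\<nu> - 1, \<nu> - 1) = complex_of_real (1 + Q \<nu> + tt \<nu> \<theta>)"
  proof -
    have "(\<Sum>e\<in>#filter_mset (\<lambda>e. esrc e = \<nu> \<and> etgt e = \<nu>) ?G. cis (pair_idx (eidx e) \<theta>))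
       = (\<Sum>s\<in>UNIV. cis (\<theta> $ s)) + (\<Sum>s\<in>UNIV. cis (- \<theta> $ s))"
      unfolding Gam_sum by (simp add: esrc_def etgt_def eidx_def pair_axis)
    also have "\<dots> = complex_of_real (2 * (\<Sum>s\<in>UNIV. cos (\<theta> $ s)))"
      by (simp add: sum.distrib[symmetric] cis_pm sum_distrib_left)
    finally have S: "(\<Sum>e\<in>#filter_mset (\<lambda>e. esrc e = \<nu> \<and> etgt e = \<nu>) ?G. cis (pair_idx (eidx e) \<theta>))
       = complex_of_real (2 * (\<Sum>s\<in>UNIV. cos (\<theta> $ s)))" .
    have sq: "sqrt (\<xi> * \<xi>) = \<xi>" using xi0 by simp
    have "M $$ (\<nu> - 1, \<nu> - 1) = fiber_entry ?G Q \<theta> \<nu> \<nu>" using Mij[of "\<nu> - 1" "\<nu> - 1"] nu2 by simp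
    also have "\<dots> = 1 + complex_of_real (Q \<nu>) - complex_of_real (2 * (\<Sum>s\<in>UNIV. cos (\<theta> $ s))) / complex_of_real \<xi>"
      unfolding fiber_entry_def S kc sq by simp
    also have "\<dots> = complex_of_real (1 + Q \<nu> + tt \<nu> \<theta>)"
      unfolding tt_def \<xi>_def[symmetric] by (simp add: field_simps)
    finally show ?thesis .
  qed
qed

lemma tt_range:
  assumes nu2: "2 \<le> \<nu>"
  defines "T \<equiv> 2 * real CARD('d::finite) / real (\<nu> - 1 + 2 * CARD('d))"
  shows "range (tt \<nu> :: real^'d \<Rightarrow> real) = {-T..T}"
proof -
  define \<xi> where "\<xi> = real (\<nu> - 1 + 2 * CARD('d))"
  have xi0: "0 < \<xi>" unfolding \<xi>_def using nu2 by auto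
  have d0: "0 < real CARD('d)" by simp
  show ?thesis
  proof
    show "range (tt \<nu> :: real^'d \<Rightarrow> real) \<subseteq> {-T..T}"
    proof
      fix x assume "x \<in> range (tt \<nu> :: real^'d \<Rightarrow> real)"
      then obtain \<theta> :: "real^'d" where x: "x = tt \<nu> \<theta>" by auto
      have "\<bar>\<Sum>s\<in>UNIV. cos (\<theta> $ s)\<bar> \<le> (\<Sum>s\<in>(UNIV::'d set). 1)"
        by (rule order_trans[OF sum_abs]) (intro sum_mono, simp)
      hence "\<bar>\<Sum>s\<in>UNIV. cos (\<theta> $ s)\<bar> \<le> real CARD('d)" by simp
      hence "\<bar>x\<bar> \<le> T" unfolding x tt_def T_def \<xi>_def[symmetric] using xi0
        by (simp add: abs_mult abs_divide divide_right_mono)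
      thus "x \<in> {-T..T}" by auto
    qed
    show "{-T..T} \<subseteq> range (tt \<nu> :: real^'d \<Rightarrow> real)"
    proof
      fix s assume s: "s \<in> {-T..T}"
      define w where "w = - s * \<xi> / (2 * real CARD('d))"
      have "\<bar>s\<bar> \<le> T" using s by auto
      hence "\<bar>s\<bar> * \<xi> \<le> 2 * real CARD('d)" unfolding T_def \<xi>_def[symmetric] using xi0
        by (simp add: field_simps)
      moreover have "s * \<xi> \<le> \<bar>s\<bar> * \<xi>" "(- s) * \<xi> \<le> \<bar>s\<bar> * \<xi>" using xi0
        by (intro mult_right_mono; simp)+
      ultimately have b1: "s * \<xi> \<le> 2 * real CARD('d)" "- s * \<xi> \<le> 2 * real CARD('d)" by linarith+
      hence w1: "-1 \<le> w" "w \<le> 1" unfolding w_def using xi0 d0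
        by (auto simp: field_simps)
      define \<theta> :: "real^'d" where "\<theta> = (\<chi> i. arccos w)"
      have "tt \<nu> \<theta> = - 2 * (real CARD('d) * w) / \<xi>"
        unfolding tt_def \<theta>_def \<xi>_def[symmetric] using w1 by (simp add: cos_arccos)
      also have "\<dots> = s" unfolding w_def using xi0 d0 by (simp add: field_simps)
      finally show "s \<in> range (tt \<nu> :: real^'d \<Rightarrow> real)" by (metis rangeI)
    qed
  qed
qed

lemma tt_0: "tt \<nu> (0 :: real^'d::finite) = - (2 * real CARD('d) / real (\<nu> - 1 + 2 * CARD('d)))"
  unfolding tt_def by simp

lemma tt_pi: "tt \<nu> (theta_pi :: real^'d::finite) = 2 * real CARD('d) / real (\<nu> - 1 + 2 * CARD('d))"
  unfolding tt_def theta_pi_def by simp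

lemma exact_Gam: "exact_loop_graph (Gam \<nu> :: 'd::finite oedge multiset) theta_pi"
  unfolding exact_loop_graph_def loop_graph_def
proof (intro conjI ballI impI)
  fix e assume e: "e \<in># (Gam \<nu> :: 'd oedge multiset)" and b: "bridge e"
  from e have "e \<in> (\<lambda>j. (j, \<nu>, 0)) ` {1..<\<nu>} \<or> e \<in> (\<lambda>j. (\<nu>, j, 0)) ` {1..<\<nu>}
     \<or> e \<in> (\<lambda>s. (\<nu>, \<nu>, axis s 1)) ` UNIV \<or> e \<in> (\<lambda>s. (\<nu>, \<nu>, - axis s 1)) ` UNIV"
    unfolding Gam_def by auto
  moreover have "\<not> (e \<in> (\<lambda>j. (j, \<nu>, 0)) ` {1..<\<nu>} \<or> e \<in> (\<lambda>j. (\<nu>, j, 0)) ` {1..<\<nu>})"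
    using b unfolding bridge_def eidx_def by auto
  ultimately obtain s where "e = (\<nu>, \<nu>, axis s 1) \<or> e = (\<nu>, \<nu>, - axis s 1)" by auto
  thus "esrc e = etgt e" "cos (pair_idx (eidx e) theta_pi) = -1"
    by (auto simp: esrc_def etgt_def eidx_def pair_axis theta_pi_def)
qed




lemma gsetup:
  fixes Q :: "nat \<Rightarrow> real"
  assumes nu2: "2 \<le> \<nu>"
  defines "\<xi> \<equiv> real (\<nu> - 1 + 2 * CARD('d::finite))"
  defines "T \<equiv> 2 * real CARD('d) / \<xi>"
  defines "G \<equiv> (Gam \<nu> :: 'd oedge multiset)"
  shows loc: "arrw \<nu> \<xi>"
    and Tpos: "0 < T"
    and eigsL: "\<And>\<theta>. fiber_eigs \<nu> G Q \<theta> = image_mset Re (proots (arrw.pc \<nu> (\<lambda>j. 1 + Q j) (1 + Q \<nu>) \<xi> (tt \<nu> \<theta>)))"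
    and lamL: "\<And>\<theta> n. 1 \<le> n \<Longrightarrow> n \<le> \<nu> \<Longrightarrow> lam \<nu> G Q \<theta> n = arrw.L \<nu> (\<lambda>j. 1 + Q j) (1 + Q \<nu>) \<xi> (n - 1) (tt \<nu> \<theta>)"
    and bandL: "\<And>n. 1 \<le> n \<Longrightarrow> n \<le> \<nu> \<Longrightarrow> band \<nu> G Q n =
        {arrw.L \<nu> (\<lambda>j. 1 + Q j) (1 + Q \<nu>) \<xi> (n - 1) (-T) .. arrw.L \<nu> (\<lambda>j. 1 + Q j) (1 + Q \<nu>) \<xi> (n - 1) T}"
    and lam0: "\<And>n. 1 \<le> n \<Longrightarrow> n \<le> \<nu> \<Longrightarrow> lam \<nu> G Q 0 n = arrw.L \<nu> (\<lambda>j. 1 + Q j) (1 + Q \<nu>) \<xi> (n - 1) (-T)"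
    and lampi: "\<And>n. 1 \<le> n \<Longrightarrow> n \<le> \<nu> \<Longrightarrow> lam \<nu> G Q theta_pi n = arrw.L \<nu> (\<lambda>j. 1 + Q j) (1 + Q \<nu>) \<xi> (n - 1) T"
proof -
  have xi0: "0 < \<xi>" unfolding \<xi>_def using nu2 by auto
  show loc: "arrw \<nu> \<xi>" by unfold_locales (use nu2 xi0 in auto)
  interpret A: arrw \<nu> "\<lambda>j. 1 + Q j" "1 + Q \<nu>" \<xi> by (rule loc)
  show "0 < T" unfolding T_def using xi0 by simp
  have cp: "char_poly (fiber_mat \<nu> G Q \<theta>) = A.pc (tt \<nu> \<theta>)" for \<theta>
    unfolding G_def
    by (rule A.char_poly_arrow) (use fiber_mat_props[OF nu2, where Q=Q and \<theta>=\<theta>] in \<open>simp_all add: \<xi>_def\<close>)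
  show eigs: "fiber_eigs \<nu> G Q \<theta> = image_mset Re (proots (A.pc (tt \<nu> \<theta>)))" for \<theta>
    unfolding fiber_eigs_def cp ..
  show lamL: "lam \<nu> G Q \<theta> n = A.L (n - 1) (tt \<nu> \<theta>)" if "1 \<le> n" "n \<le> \<nu>" for \<theta> n
    unfolding lam_def eigs using A.nth_eigs[OF that] .
  show "band \<nu> G Q n = {A.L (n - 1) (-T) .. A.L (n - 1) T}" if n: "1 \<le> n" "n \<le> \<nu>" for n
  proof -
    have "band \<nu> G Q n = A.L (n - 1) ` range (tt \<nu> :: real^'d \<Rightarrow> real)"
      unfolding band_def using lamL[OF n] by (auto simp: image_image)
    also have "range (tt \<nu> :: real^'d \<Rightarrow> real) = {-T..T}" unfolding T_def \<xi>_def by (rule tt_range[OF nu2])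
    also have "A.L (n - 1) ` {-T..T} = {A.L (n - 1) (-T) .. A.L (n - 1) T}"
      using n \<open>0 < T\<close> by (intro A.L_image) auto
    finally show ?thesis .
  qed
  show "lam \<nu> G Q 0 n = A.L (n - 1) (-T)" if n: "1 \<le> n" "n \<le> \<nu>" for n
    using lamL[OF n, of 0] tt_0[of \<nu>, where 'd='d] unfolding T_def \<xi>_def by simp
  show "lam \<nu> G Q theta_pi n = A.L (n - 1) T" if n: "1 \<le> n" "n \<le> \<nu>" for n
    using lamL[OF n, of theta_pi] tt_pi[of \<nu>, where 'd='d] unfolding T_def \<xi>_def by simp
qed

lemma deg_facts:
  fixes Q :: "nat \<Rightarrow> real"
  assumes nu2: "2 \<le> \<nu>" and n: "1 \<le> n" "n \<le> \<nu>"
  defines "\<xi> \<equiv> real (\<nu> - 1 + 2 * CARD('d::finite))"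
  defines "G \<equiv> (Gam \<nu> :: 'd oedge multiset)"
  shows "degenerate_band \<nu> G Q n \<longleftrightarrow> arrw.cslot \<nu> (\<lambda>j. 1 + Q j) (n - 1)"
    and "arrw.cslot \<nu> (\<lambda>j. 1 + Q j) (n - 1) \<Longrightarrow> band \<nu> G Q n = {arrw.as \<nu> (\<lambda>j. 1 + Q j) ! (n - 1)}"
proof -
  define T where "T = 2 * real CARD('d) / \<xi>"
  have loc: "arrw \<nu> \<xi>" unfolding \<xi>_def using nu2 by unfold_locales auto
  have Tpos: "0 < T" unfolding T_def \<xi>_def using nu2 by auto
  interpret A: arrw \<nu> "\<lambda>j. 1 + Q j" "1 + Q \<nu>" \<xi> by (rule loc)
  have B: "\<And>n. 1 \<le> n \<Longrightarrow> n \<le> \<nu> \<Longrightarrow> band \<nu> G Q n = {A.L (n - 1) (-T) .. A.L (n - 1) T}"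
    using gsetup(5)[OF nu2, where Q=Q] unfolding G_def T_def \<xi>_def by blast
  note B = B[OF n]
  show c: "band \<nu> G Q n = {A.as ! (n - 1)}" if "A.cslot (n - 1)"
    unfolding B using that by (simp add: A.L_const)
  show "degenerate_band \<nu> G Q n \<longleftrightarrow> A.cslot (n - 1)"
  proof
    assume d: "degenerate_band \<nu> G Q n"
    show "A.cslot (n - 1)"
    proof (rule ccontr)
      assume "\<not> A.cslot (n - 1)"
      hence lt: "A.L (n - 1) (-T) < A.L (n - 1) T" using A.L_nondeg n Tpos by auto
      obtain c where "band \<nu> G Q n = {c}" using d unfolding degenerate_band_def by auto
      hence "{A.L (n - 1) (-T) .. A.L (n - 1) T} = {c}" using B by simp
      hence "A.L (n - 1) (-T) = c" "A.L (n - 1) T = c" using lt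
        by (metis atLeastAtMost_singleton_iff)+
      thus False using lt by simp
    qed
  next
    assume "A.cslot (n - 1)"
    thus "degenerate_band \<nu> G Q n" using c unfolding degenerate_band_def by blast
  qed
qed

lemma spec_split: "spec N A Q = spec_ac N A Q \<union> spec_fb N A Q"
proof (rule equalityI; rule subsetI)
  fix x assume "x \<in> spec N A Q"
  then obtain n where n: "n \<in> {1..N}" "x \<in> band N A Q n" unfolding spec_def by blast
  show "x \<in> spec_ac N A Q \<union> spec_fb N A Q"
  proof (cases "degenerate_band N A Q n")
    case True
    then obtain c where "band N A Q n = {c}" unfolding degenerate_band_def by blast
    hence "x \<in> spec_fb N A Q" using n unfolding spec_fb_def by auto
    thus ?thesis by blast
  next
    case False
    hence "x \<in> spec_ac N A Q" using n unfolding spec_ac_def by blast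
    thus ?thesis by blast
  qed
next
  fix x assume "x \<in> spec_ac N A Q \<union> spec_fb N A Q"
  thus "x \<in> spec N A Q"
  proof
    assume "x \<in> spec_ac N A Q" thus ?thesis unfolding spec_ac_def spec_def by blast
  next
    assume "x \<in> spec_fb N A Q"
    then obtain n where "n \<in> {1..N}" "band N A Q n = {x}" unfolding spec_fb_def by blast
    thus ?thesis unfolding spec_def by blast
  qed
qed

lemma part_ii:
  fixes Q :: "nat \<Rightarrow> real"
  assumes nu2: "2 \<le> \<nu>"
  defines "\<xi> \<equiv> real (\<nu> - 1 + 2 * CARD('d::finite))"
  defines "G \<equiv> (Gam \<nu> :: 'd oedge multiset)"
  shows "spec \<nu> G Q = (\<Union>n\<in>{1..\<nu>}. {lam \<nu> G Q 0 n .. lam \<nu> G Q theta_pi n})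
        \<and> emeasure lborel (spec \<nu> G Q) = ennreal (4 * CARD('d) / \<xi>)"
proof -
  define T where "T = 2 * real CARD('d) / \<xi>"
  have loc: "arrw \<nu> \<xi>" unfolding \<xi>_def using nu2 by unfold_locales auto
  have Tpos: "0 < T" unfolding T_def \<xi>_def using nu2 by auto
  interpret A: arrw \<nu> "\<lambda>j. 1 + Q j" "1 + Q \<nu>" \<xi> by (rule loc)
  have B: "\<And>n. 1 \<le> n \<Longrightarrow> n \<le> \<nu> \<Longrightarrow> band \<nu> G Q n = {A.L (n - 1) (-T) .. A.L (n - 1) T}"
    using gsetup(5)[OF nu2, where Q=Q] unfolding G_def T_def \<xi>_def by blast
  have sp: "spec \<nu> G Q = (\<Union>n\<in>{1..\<nu>}. {A.L (n - 1) (-T) .. A.L (n - 1) T})"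
    unfolding spec_def using B by auto
  have "(\<Union>n\<in>{1..\<nu>}. {A.L (n - 1) (-T) .. A.L (n - 1) T}) = (\<Union>k<\<nu>. {A.L k (-T) .. A.L k T})"
  proof (rule equalityI; rule subsetI)
    fix x assume "x \<in> (\<Union>n\<in>{1..\<nu>}. {A.L (n - 1) (-T) .. A.L (n - 1) T})"
    then obtain n where "n \<in> {1..\<nu>}" "x \<in> {A.L (n - 1) (-T) .. A.L (n - 1) T}" by blast
    thus "x \<in> (\<Union>k<\<nu>. {A.L k (-T) .. A.L k T})" by (intro UN_I[of "n - 1"]) auto
  next
    fix x assume "x \<in> (\<Union>k<\<nu>. {A.L k (-T) .. A.L k T})"
    then obtain k where "k < \<nu>" "x \<in> {A.L k (-T) .. A.L k T}" by blast
    thus "x \<in> (\<Union>n\<in>{1..\<nu>}. {A.L (n - 1) (-T) .. A.L (n - 1) T})" by (intro UN_I[of "Suc k"]) auto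
  qed
  hence "emeasure lborel (spec \<nu> G Q) = ennreal (2 * T)" using A.measure_spec[of T] Tpos sp by simp
  also have "2 * T = 4 * CARD('d) / \<xi>" unfolding T_def by simp
  finally have m: "emeasure lborel (spec \<nu> G Q) = ennreal (4 * CARD('d) / \<xi>)" .
  have "spec \<nu> G Q = (\<Union>n\<in>{1..\<nu>}. {lam \<nu> G Q 0 n .. lam \<nu> G Q theta_pi n})"
  proof -
    have "\<And>n. 1 \<le> n \<Longrightarrow> n \<le> \<nu> \<Longrightarrow> lam \<nu> G Q 0 n = A.L (n - 1) (-T)"
      using gsetup(6)[OF nu2, where Q=Q] unfolding G_def T_def \<xi>_def by blast
    moreover have "\<And>n. 1 \<le> n \<Longrightarrow> n \<le> \<nu> \<Longrightarrow> lam \<nu> G Q theta_pi n = A.L (n - 1) T"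
      using gsetup(7)[OF nu2, where Q=Q] unfolding G_def T_def \<xi>_def by blast
    ultimately show ?thesis unfolding sp by (intro SUP_cong) auto
  qed
  thus ?thesis using m by simp
qed

lemma part_iii:
  fixes Q :: "nat \<Rightarrow> real"
  assumes nu2: "2 \<le> \<nu>" and inj: "inj_on Q {1..<\<nu>}"
  defines "\<xi> \<equiv> real (\<nu> - 1 + 2 * CARD('d::finite))"
  defines "G \<equiv> (Gam \<nu> :: 'd oedge multiset)"
  shows "spec \<nu> G Q = spec_ac \<nu> G Q \<and> spec_fb \<nu> G Q = {}"
proof -
  have loc: "arrw \<nu> \<xi>" unfolding \<xi>_def using nu2 by unfold_locales auto
  interpret A: arrw \<nu> "\<lambda>j. 1 + Q j" "1 + Q \<nu>" \<xi> by (rule loc)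
  have nc: "\<not> A.cslot k" for k
  proof
    assume cs: "A.cslot k"
    define y where "y = A.as ! k"
    have k: "0 < k" "k < length A.as" "A.as ! (k - 1) = y" using cs unfolding A.cslot_def y_def by auto
    have "{k - 1, k} \<subseteq> {i. i < length A.as \<and> A.as ! i = y}" using k y_def by auto
    hence "card {k - 1, k} \<le> card {i. i < length A.as \<and> A.as ! i = y}" by (intro card_mono) auto
    moreover have "card {k - 1, k} = 2" using k by auto
    moreover have "card {i. i < length A.as \<and> A.as ! i = y} = card {j\<in>A.J. 1 + Q j = y}"
      using A.count_as A.count_as2 by simp
    moreover have "card {j\<in>A.J. 1 + Q j = y} \<le> Suc 0"
      using inj by (subst card_le_Suc0_iff_eq) (auto simp: A.J_def inj_on_def)
    ultimately show False by simp
  qed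
  have nd: "\<not> degenerate_band \<nu> G Q n" if "n \<in> {1..\<nu>}" for n
    using deg_facts(1)[OF nu2, where Q=Q and n=n] that nc unfolding G_def \<xi>_def by auto
  have fb: "spec_fb \<nu> G Q = {}" using nd unfolding spec_fb_def degenerate_band_def by blast
  have "spec_ac \<nu> G Q = spec \<nu> G Q"
  proof -
    have "{n\<in>{1..\<nu>}. \<not> degenerate_band \<nu> G Q n} = {1..\<nu>}" using nd by auto
    thus ?thesis unfolding spec_ac_def spec_def by simp
  qed
  thus ?thesis using fb by simp
qed

lemma part_iv:
  fixes Q :: "nat \<Rightarrow> real"
  assumes nu2: "2 \<le> \<nu>" and m: "2 \<le> m" "card {j \<in> {1..<\<nu>}. Q j = qs} = m"
  defines "\<xi> \<equiv> real (\<nu> - 1 + 2 * CARD('d::finite))"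
  defines "G \<equiv> (Gam \<nu> :: 'd oedge multiset)"
  shows "qs + 1 \<in> spec_fb \<nu> G Q \<and> fb_multiplicity \<nu> G Q (qs + 1) (m - 1)"
proof -
  have loc: "arrw \<nu> \<xi>" unfolding \<xi>_def using nu2 by unfold_locales auto
  interpret A: arrw \<nu> "\<lambda>j. 1 + Q j" "1 + Q \<nu>" \<xi> by (rule loc)
  define z where "z = qs + 1"
  have Kset: "{j\<in>A.J. 1 + Q j = z} = {j \<in> {1..<\<nu>}. Q j = qs}" unfolding z_def A.J_def by auto
  have cK: "card {j\<in>A.J. 1 + Q j = z} = m" using Kset m by simp
  have "{j\<in>A.J. 1 + Q j = z} \<noteq> {}"
  proof
    assume "{j\<in>A.J. 1 + Q j = z} = {}"
    hence "card {j\<in>A.J. 1 + Q j = z} = 0" by (simp only: card.empty)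
    thus False using cK m by simp
  qed
  hence zin: "z \<in> (\<lambda>j. 1 + Q j) ` A.J" by auto
  have cnt: "count (fiber_eigs \<nu> G Q \<theta>) z = m - 1" for \<theta>
  proof -
    have "fiber_eigs \<nu> G Q \<theta> = image_mset Re (proots (A.pc (tt \<nu> \<theta>)))"
      using gsetup(3)[OF nu2, where Q=Q and \<theta>=\<theta>] unfolding G_def \<xi>_def by simp
    thus ?thesis using A.count_eigs[OF zin] cK by simp
  qed
  have fbm: "fb_multiplicity \<nu> G Q z (m - 1)" unfolding fb_multiplicity_def
    by (rule AE_I2) (simp add: cnt)
  define I where "I = {i. i < length A.as \<and> A.as ! i = z}"
  have fI: "finite I" unfolding I_def by auto
  have cI: "card I = m" unfolding I_def using A.count_as A.count_as2 cK by simp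
  hence "I \<noteq> {}" using m by auto
  define i0 where "i0 = Min I"
  have i0I: "i0 \<in> I" unfolding i0_def using fI \<open>I \<noteq> {}\<close> by simp
  obtain i1 where i1: "i1 \<in> I" "i1 \<noteq> i0"
  proof (rule ccontr)
    assume "\<not> thesis"
    hence "I \<subseteq> {i0}" using that by blast
    hence "card I \<le> 1" using card_mono[of "{i0}" I] by simp
    thus False using cI m by simp
  qed
  have "i0 \<le> i1" unfolding i0_def using fI i1 by simp
  hence lt: "i0 < i1" using i1 by simp
  have l1: "i1 < length A.as" "A.as ! i1 = z" "A.as ! i0 = z" using i1 i0I unfolding I_def by auto
  have "A.as ! i0 \<le> A.as ! Suc i0" "A.as ! Suc i0 \<le> A.as ! i1"
    using lt l1 by (intro sorted_nth_mono[OF A.sorted_as]; simp)+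
  hence s: "A.as ! Suc i0 = z" using l1 by simp
  have cs: "A.cslot (Suc i0)" unfolding A.cslot_def using lt l1 s by simp
  have n: "1 \<le> Suc (Suc i0)" "Suc (Suc i0) \<le> \<nu>" using lt l1 A.len_as by auto
  have "band \<nu> G Q (Suc (Suc i0)) = {z}"
    using deg_facts(2)[OF nu2 n, where Q=Q] cs s unfolding G_def \<xi>_def by simp
  hence "band \<nu> G Q (Suc (Suc i0)) = {z} \<and> Suc (Suc i0) \<in> {1..\<nu>}" using n by simp
  hence "\<exists>n\<in>{1..\<nu>}. band \<nu> G Q n = {z}" by blast
  hence "z \<in> spec_fb \<nu> G Q" unfolding spec_fb_def by simp
  thus ?thesis using fbm unfolding z_def by simp
qed

lemma part_i:
  fixes Q :: "nat \<Rightarrow> real"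
  assumes nu2: "2 \<le> \<nu>" and Q0: "\<And>j. Q j = 0"
  defines "\<xi> \<equiv> real (\<nu> - 1 + 2 * CARD('d::finite))"
  defines "G \<equiv> (Gam \<nu> :: 'd oedge multiset)"
  shows "spec_fb \<nu> G Q = (if \<nu> \<ge> 3 then {1} else {})
      \<and> fb_multiplicity \<nu> G Q 1 (\<nu> - 2)
      \<and> spec_ac \<nu> G Q = band \<nu> G Q 1 \<union> band \<nu> G Q \<nu>
      \<and> band \<nu> G Q 1 = {0 .. 2 * CARD('d) / \<xi>}
      \<and> band \<nu> G Q \<nu> = {2 - 2 * CARD('d) / \<xi> .. 2}"
proof -
  define T where "T = 2 * real CARD('d) / \<xi>"
  define r where "r = real (\<nu> - 1)"
  have r1: "1 \<le> r" unfolding r_def using nu2 by simp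
  have xir: "\<xi> = r + 2 * real CARD('d)" unfolding \<xi>_def r_def by simp
  have xi0: "0 < \<xi>" using xir r1 by simp
  have d0: "0 < real CARD('d)" by simp
  have loc: "arrw \<nu> \<xi>" unfolding \<xi>_def using nu2 by unfold_locales auto
  interpret A: arrw \<nu> "\<lambda>j. 1 + Q j" "1 + Q \<nu>" \<xi> by (rule loc)
  have as1: "A.as ! i = 1" if "i < length A.as" for i
  proof -
    have "A.as ! i \<in> set A.as" using that by simp
    thus ?thesis unfolding A.set_as using Q0 by auto
  qed
  have lenas: "length A.as = \<nu> - 1" by (rule A.len_as)
  have cs_iff: "A.cslot k \<longleftrightarrow> 0 < k \<and> k < \<nu> - 1" for k
    unfolding A.cslot_def lenas using as1 lenas by auto
  have hy: "A.h y = y - 1 - r * (1 / (y - 1)) / \<xi>" for y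
    unfolding A.h_def using Q0 A.cardJ by (simp add: r_def)
  have B: "\<And>n. 1 \<le> n \<Longrightarrow> n \<le> \<nu> \<Longrightarrow> band \<nu> G Q n = {A.L (n - 1) (-T) .. A.L (n - 1) T}"
    using gsetup(5)[OF nu2, where Q=Q] unfolding G_def T_def \<xi>_def by blast
  have T1: "T < 1" unfolding T_def using xir r1 d0 by (simp add: field_simps)
  have Tpos: "0 < T" unfolding T_def using xi0 d0 by simp
  have T1r: "T - 1 = - r / \<xi>" unfolding T_def using xir xi0 by (simp add: field_simps)
  have l00: "A.L 0 (-T) = 0"
  proof (rule A.L_gap_eq)
    show "0 \<le> length A.as" by simp
    show "\<not> A.cslot 0" by (simp add: A.cslot_def)
    show "A.inslot 0 0" unfolding A.inslot_def using as1[of 0] lenas nu2 by auto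
    show "A.h 0 = - T" unfolding hy T_def using xir xi0 by (simp add: field_simps)
  qed
  have l0T: "A.L 0 T = T"
  proof (rule A.L_gap_eq)
    show "0 \<le> length A.as" by simp
    show "\<not> A.cslot 0" by (simp add: A.cslot_def)
    show "A.inslot 0 T" unfolding A.inslot_def using as1[of 0] lenas nu2 T1 by auto
    have "r * (1 / (- r / \<xi>)) / \<xi> = -1" using r1 xi0 by (simp add: field_simps)
    hence "r * (1 / (T - 1)) / \<xi> = -1" unfolding T1r .
    thus "A.h T = T" unfolding hy by simp
  qed
  have lnuT: "A.L (\<nu> - 1) (-T) = 2 - T"
  proof (rule A.L_gap_eq)
    show "\<nu> - 1 \<le> length A.as" using lenas by simp
    show "\<not> A.cslot (\<nu> - 1)" using cs_iff by simp
    show "A.inslot (\<nu> - 1) (2 - T)" unfolding A.inslot_def using as1[of "\<nu> - 2"] lenas nu2 T1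
      by (auto simp: numeral_2_eq_2)
    have e: "2 - T - 1 = r / \<xi>" using T1r by simp
    have "r * (1 / (r / \<xi>)) / \<xi> = 1" using r1 xi0 by (simp add: field_simps)
    hence "r * (1 / (2 - T - 1)) / \<xi> = 1" unfolding e .
    thus "A.h (2 - T) = - T" unfolding hy by linarith
  qed
  have lnu2: "A.L (\<nu> - 1) T = 2"
  proof (rule A.L_gap_eq)
    show "\<nu> - 1 \<le> length A.as" using lenas by simp
    show "\<not> A.cslot (\<nu> - 1)" using cs_iff by simp
    show "A.inslot (\<nu> - 1) 2" unfolding A.inslot_def using as1[of "\<nu> - 2"] lenas nu2
      by (auto simp: numeral_2_eq_2)
    show "A.h 2 = T" unfolding hy T_def using xir xi0 by (simp add: field_simps)
  qed
  have b1: "band \<nu> G Q 1 = {0 .. T}" using B[of 1] nu2 l00 l0T by simp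
  have bnu: "band \<nu> G Q \<nu> = {2 - T .. 2}" using B[of \<nu>] nu2 lnuT lnu2 by simp
  have deg: "degenerate_band \<nu> G Q n \<longleftrightarrow> 2 \<le> n \<and> n < \<nu>" if "n \<in> {1..\<nu>}" for n
  proof -
    have n1: "1 \<le> n" "n \<le> \<nu>" using that by auto
    have "degenerate_band \<nu> G Q n \<longleftrightarrow> A.cslot (n - 1)"
      using deg_facts(1)[OF nu2 n1, where Q=Q] unfolding G_def \<xi>_def .
    also have "\<dots> \<longleftrightarrow> 2 \<le> n \<and> n < \<nu>" unfolding cs_iff using n1 by auto
    finally show ?thesis .
  qed
  have bdeg: "band \<nu> G Q n = {1}" if "2 \<le> n" "n < \<nu>" for n
  proof -
    have "A.cslot (n - 1)" using cs_iff that by auto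
    moreover have "A.as ! (n - 1) = 1" using as1 lenas that by auto
    moreover have n1: "1 \<le> n" "n \<le> \<nu>" using that by auto
    ultimately show ?thesis using deg_facts(2)[OF nu2 n1, where Q=Q]
      unfolding G_def \<xi>_def by simp
  qed
  have fb: "spec_fb \<nu> G Q = (if \<nu> \<ge> 3 then {1} else {})"
  proof (rule equalityI; rule subsetI)
    fix c assume "c \<in> spec_fb \<nu> G Q"
    then obtain n where n: "n \<in> {1..\<nu>}" "band \<nu> G Q n = {c}" unfolding spec_fb_def by blast
    hence "degenerate_band \<nu> G Q n" unfolding degenerate_band_def by blast
    hence "2 \<le> n" "n < \<nu>" using deg[OF n(1)] by auto
    hence "c = 1" "3 \<le> \<nu>" using bdeg n by auto
    thus "c \<in> (if \<nu> \<ge> 3 then {1} else {})" by simp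
  next
    fix c :: real assume c: "c \<in> (if \<nu> \<ge> 3 then {1} else {})"
    hence c1: "c = 1" "3 \<le> \<nu>" by (auto split: if_splits)
    hence "band \<nu> G Q 2 = {c} \<and> 2 \<in> {1..\<nu>}" using bdeg[of 2] by simp
    hence "\<exists>n\<in>{1..\<nu>}. band \<nu> G Q n = {c}" by blast
    thus "c \<in> spec_fb \<nu> G Q" unfolding spec_fb_def by simp
  qed
  have fbm: "fb_multiplicity \<nu> G Q 1 (\<nu> - 2)"
  proof -
    have J1: "1 \<in> A.J" unfolding A.J_def using nu2 by simp
    hence oin: "1 \<in> (\<lambda>j. 1 + Q j) ` A.J" using Q0 by (auto intro: image_eqI[of _ _ 1])
    have "{j \<in> A.J. 1 + Q j = 1} = A.J" using Q0 by auto
    hence cJ: "card {j \<in> A.J. 1 + Q j = 1} = \<nu> - 1" using A.cardJ by simp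
    have "count (fiber_eigs \<nu> G Q \<theta>) 1 = \<nu> - 2" for \<theta>
    proof -
      have "fiber_eigs \<nu> G Q \<theta> = image_mset Re (proots (A.pc (tt \<nu> \<theta>)))"
        using gsetup(3)[OF nu2, where Q=Q and \<theta>=\<theta>] unfolding G_def \<xi>_def by simp
      thus ?thesis using A.count_eigs[OF oin] cJ by simp
    qed
    thus ?thesis unfolding fb_multiplicity_def by (intro AE_I2) simp
  qed
  have ac: "spec_ac \<nu> G Q = band \<nu> G Q 1 \<union> band \<nu> G Q \<nu>"
  proof -
    have "{n\<in>{1..\<nu>}. \<not> degenerate_band \<nu> G Q n} = {1, \<nu>}" using deg nu2 by auto
    thus ?thesis unfolding spec_ac_def by simp
  qed
  have "T = 2 * CARD('d) / \<xi>" unfolding T_def by simp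
  thus ?thesis using fb fbm ac b1 bnu by simp
qed


theorem proposition6p1:
  fixes \<nu> :: nat
  assumes d2: "CARD('d::finite) \<ge> 2"
      and nu2: "\<nu> \<ge> 2"
  defines "\<xi> \<equiv> real (\<nu> - 1 + 2 * CARD('d))"
  defines "G \<equiv> (Gam \<nu> :: 'd oedge multiset)"
  shows
    "exact_loop_graph G (theta_pi :: real ^ 'd)
     \<and>
     \<comment> \<open>(i): Laplacian, Q = 0\<close>
     (spec \<nu> G (\<lambda>_. 0) = spec_ac \<nu> G (\<lambda>_. 0) \<union> spec_fb \<nu> G (\<lambda>_. 0)
      \<and> spec_fb \<nu> G (\<lambda>_. 0) = (if \<nu> \<ge> 3 then {1} else {})
      \<and> fb_multiplicity \<nu> G (\<lambda>_. 0) 1 (\<nu> - 2)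
      \<and> spec_ac \<nu> G (\<lambda>_. 0) = band \<nu> G (\<lambda>_. 0) 1 \<union> band \<nu> G (\<lambda>_. 0) \<nu>
      \<and> band \<nu> G (\<lambda>_. 0) 1 = {0 .. 2 * CARD('d) / \<xi>}
      \<and> band \<nu> G (\<lambda>_. 0) \<nu> = {2 - 2 * CARD('d) / \<xi> .. 2})
     \<and>
     \<comment> \<open>(ii) and (v): any real periodic potential\<close>
     (\<forall>Q :: nat \<Rightarrow> real.
        spec \<nu> G Q = (\<Union>n\<in>{1..\<nu>}. {lam \<nu> G Q 0 n .. lam \<nu> G Q theta_pi n})
        \<and> emeasure lborel (spec \<nu> G Q) = ennreal (4 * CARD('d) / \<xi>))
     \<and>
     \<comment> \<open>(iii)\<close>
     (\<forall>Q :: nat \<Rightarrow> real. Q \<nu> = 0 \<and> inj_on Q {1..<\<nu>} \<longrightarrow>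
        spec \<nu> G Q = spec_ac \<nu> G Q \<and> spec_fb \<nu> G Q = {})
     \<and>
     \<comment> \<open>(iv)\<close>
     (\<forall>(Q :: nat \<Rightarrow> real) (qs :: real) (m :: nat).
        Q \<nu> = 0 \<and> m \<ge> 2 \<and> card {j \<in> {1..<\<nu>}. Q j = qs} = m \<longrightarrow>
        qs + 1 \<in> spec_fb \<nu> G Q \<and> fb_multiplicity \<nu> G Q (qs + 1) (m - 1))"
  proof -
  have ex: "exact_loop_graph G (theta_pi :: real ^ 'd)" unfolding G_def by (rule exact_Gam)
  have i: "spec \<nu> G (\<lambda>_. 0) = spec_ac \<nu> G (\<lambda>_. 0) \<union> spec_fb \<nu> G (\<lambda>_. 0)
      \<and> spec_fb \<nu> G (\<lambda>_. 0) = (if \<nu> \<ge> 3 then {1} else {})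
      \<and> fb_multiplicity \<nu> G (\<lambda>_. 0) 1 (\<nu> - 2)
      \<and> spec_ac \<nu> G (\<lambda>_. 0) = band \<nu> G (\<lambda>_. 0) 1 \<union> band \<nu> G (\<lambda>_. 0) \<nu>
      \<and> band \<nu> G (\<lambda>_. 0) 1 = {0 .. 2 * CARD('d) / \<xi>}
      \<and> band \<nu> G (\<lambda>_. 0) \<nu> = {2 - 2 * CARD('d) / \<xi> .. 2}"
    using spec_split[of \<nu> G "\<lambda>_. 0"] part_i[OF nu2, where Q="\<lambda>_. 0" and 'd='d]
    unfolding G_def \<xi>_def by simp
  have ii: "\<forall>Q :: nat \<Rightarrow> real.
        spec \<nu> G Q = (\<Union>n\<in>{1..\<nu>}. {lam \<nu> G Q 0 n .. lam \<nu> G Q theta_pi n})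
        \<and> emeasure lborel (spec \<nu> G Q) = ennreal (4 * CARD('d) / \<xi>)"
  proof
    fix Q :: "nat \<Rightarrow> real"
    show "spec \<nu> G Q = (\<Union>n\<in>{1..\<nu>}. {lam \<nu> G Q 0 n .. lam \<nu> G Q theta_pi n})
        \<and> emeasure lborel (spec \<nu> G Q) = ennreal (4 * CARD('d) / \<xi>)"
      using part_ii[OF nu2, where Q=Q and 'd='d] unfolding G_def \<xi>_def .
  qed
  have iii: "\<forall>Q :: nat \<Rightarrow> real. Q \<nu> = 0 \<and> inj_on Q {1..<\<nu>} \<longrightarrow>
        spec \<nu> G Q = spec_ac \<nu> G Q \<and> spec_fb \<nu> G Q = {}"
  proof (intro allI impI)
    fix Q :: "nat \<Rightarrow> real" assume "Q \<nu> = 0 \<and> inj_on Q {1..<\<nu>}"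
    hence inj: "inj_on Q {1..<\<nu>}" by simp
    show "spec \<nu> G Q = spec_ac \<nu> G Q \<and> spec_fb \<nu> G Q = {}"
      using part_iii[OF nu2 inj, where 'd='d] unfolding G_def .
  qed
  have iv: "\<forall>(Q :: nat \<Rightarrow> real) (qs :: real) (m :: nat).
        Q \<nu> = 0 \<and> m \<ge> 2 \<and> card {j \<in> {1..<\<nu>}. Q j = qs} = m \<longrightarrow>
        qs + 1 \<in> spec_fb \<nu> G Q \<and> fb_multiplicity \<nu> G Q (qs + 1) (m - 1)"
  proof (intro allI impI)
    fix Q :: "nat \<Rightarrow> real" and qs :: real and m :: nat
    assume h: "Q \<nu> = 0 \<and> m \<ge> 2 \<and> card {j \<in> {1..<\<nu>}. Q j = qs} = m"
    hence m2: "2 \<le> m" and mc: "card {j \<in> {1..<\<nu>}. Q j = qs} = m" by auto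
    show "qs + 1 \<in> spec_fb \<nu> G Q \<and> fb_multiplicity \<nu> G Q (qs + 1) (m - 1)"
      using part_iv[OF nu2 m2 mc, where 'd='d] unfolding G_def .
  qed
  show ?thesis using ex i ii iii iv by blast
qed

end
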